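(* Let $\Phi=B_n$ or $C_n$ (standard realization), let $\mu\in\mathfrak h^*$ be an integral anti-dominant weight, $J=\{\alpha\in\Delta:\langle\mu,\alpha^\vee\rangle=0\}$, $W^J$ the set of $w\in W$ with $\ell(ws_\alpha)=\ell(w)+1$ for all $\alpha\in J$. If $w\in W^J$ and $\lambda=w\mu$, then $p(\lambda^-)=p({}^-\vec w)$.
   Context: $\mathfrak h^*=\mathbb C^n$ with basis $\varepsilon_i$, simple roots $\varepsilon_i-\varepsilon_{i+1}$ ($i<n$) and $\varepsilon_n$ (type $B$) or $2\varepsilon_n$ (type $C$). $W$ is identified with $W_n$ (signed permutations $w$ of $\{\pm1,\dots,\pm n\}$, $w(-i)=-w(i)$) via $s_{\varepsilon_i-\varepsilon_{i+1}}\mapsto s_{n-i}$ and $s_{\alpha_n}\mapsto t$; equivalently $w(\varepsilon_{n+1-k})=\operatorname{sgn}(w(k))\,\varepsilon_{n+1-|w(k)|}$. Anti-dominant: $\langle\mu,\alpha^\vee\rangle\notin\mathbb Z_{>0}$ for $\alpha\in\Phi^+$. $\lambda^-=(\lambda_1,\dots,\lambda_n,-\lambda_n,\dots,-\lambda_1)$, ${}^-\vec w=(-w(n),\dots,-w(1),w(1),\dots,w(n))$, and $p(x)$ is the shape of the Robinson–Schensted tableau of $x$ (row insertion, bumping the leftmost entry strictly greater). *)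

theory Defs
  imports Complex_Main
begin

datatype rtype = TypeB | TypeC

text \<open>Vectors of h* = C^n are functions nat => complex; only coordinates 1..n matter.\<close>

definition evec :: "nat \<Rightarrow> nat \<Rightarrow> complex" where
  "evec i = (\<lambda>k. if k = i then 1 else 0)"

definition pos_roots :: "rtype \<Rightarrow> nat \<Rightarrow> (nat \<Rightarrow> complex) set" where
  "pos_roots T n =
     {(\<lambda>k. evec i k - evec j k) | i j. 1 \<le> i \<and> i < j \<and> j \<le> n}
   \<union> {(\<lambda>k. evec i k + evec j k) | i j. 1 \<le> i \<and> i < j \<and> j \<le> n}
   \<union> {(\<lambda>k. (if T = TypeB then 1 else 2) * evec i k) | i. 1 \<le> i \<and> i \<le> n}"

definition simple_root :: "rtype \<Rightarrow> nat \<Rightarrow> nat \<Rightarrow> nat \<Rightarrow> complex" where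
  "simple_root T n i =
     (if i < n then (\<lambda>k. evec i k - evec (i+1) k)
      else (\<lambda>k. (if T = TypeB then 1 else 2) * evec n k))"

definition coroot :: "nat \<Rightarrow> (nat \<Rightarrow> complex) \<Rightarrow> nat \<Rightarrow> complex" where
  "coroot n \<alpha> = (\<lambda>k. 2 * \<alpha> k / (\<Sum>j=1..n. \<alpha> j * \<alpha> j))"

definition pairing :: "nat \<Rightarrow> (nat \<Rightarrow> complex) \<Rightarrow> (nat \<Rightarrow> complex) \<Rightarrow> complex" where
  "pairing n \<mu> \<alpha> = (\<Sum>k=1..n. \<mu> k * coroot n \<alpha> k)"

text \<open>Integral: pairing with every coroot is an integer (checking positive roots suffices,
  since negative roots give the negated value).\<close>
definition integral_weight :: "rtype \<Rightarrow> nat \<Rightarrow> (nat \<Rightarrow> complex) \<Rightarrow> bool" where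
  "integral_weight T n \<mu> = (\<forall>\<alpha>\<in>pos_roots T n. pairing n \<mu> \<alpha> \<in> \<int>)"

definition anti_dominant :: "rtype \<Rightarrow> nat \<Rightarrow> (nat \<Rightarrow> complex) \<Rightarrow> bool" where
  "anti_dominant T n \<mu> =
     (\<forall>\<alpha>\<in>pos_roots T n. \<not> (\<exists>m::int. m > 0 \<and> pairing n \<mu> \<alpha> = of_int m))"

definition signed_perm :: "nat \<Rightarrow> (int \<Rightarrow> int) \<Rightarrow> bool" where
  "signed_perm n w =
     (bij_betw w {x. 1 \<le> \<bar>x\<bar> \<and> \<bar>x\<bar> \<le> int n} {x. 1 \<le> \<bar>x\<bar> \<and> \<bar>x\<bar> \<le> int n}
      \<and> (\<forall>x. w (-x) = - w x)
      \<and> (\<forall>x. \<not> (1 \<le> \<bar>x\<bar> \<and> \<bar>x\<bar> \<le> int n) \<longrightarrow> w x = x))"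

definition sgen :: "int \<Rightarrow> int \<Rightarrow> int" where
  "sgen i = (\<lambda>x. if x = i then i + 1 else if x = i + 1 then i
               else if x = -i then -(i+1) else if x = -(i+1) then -i else x)"

definition tgen :: "int \<Rightarrow> int" where
  "tgen = (\<lambda>x. if x = 1 then -1 else if x = -1 then 1 else x)"

definition generators :: "nat \<Rightarrow> (int \<Rightarrow> int) set" where
  "generators n = {sgen (int i) | i. 1 \<le> i \<and> i < n} \<union> {tgen}"

definition cox_length :: "nat \<Rightarrow> (int \<Rightarrow> int) \<Rightarrow> nat" where
  "cox_length n w =
     (LEAST m. \<exists>ws. length ws = m \<and> set ws \<subseteq> generators n \<and> foldr (\<circ>) ws id = w)"

text \<open>Identification of simple reflections: s_{e_i - e_{i+1}} -> s_{n-i}, s_{alpha_n} -> t.\<close>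
definition simple_refl :: "nat \<Rightarrow> nat \<Rightarrow> int \<Rightarrow> int" where
  "simple_refl n i = (if i < n then sgen (int (n - i)) else tgen)"

definition WJ :: "rtype \<Rightarrow> nat \<Rightarrow> (nat \<Rightarrow> complex) \<Rightarrow> (int \<Rightarrow> int) set" where
  "WJ T n \<mu> = {w. signed_perm n w \<and>
     (\<forall>i\<in>{1..n}. pairing n \<mu> (simple_root T n i) = 0 \<longrightarrow>
        cox_length n (w \<circ> simple_refl n i) = cox_length n w + 1)}"

text \<open>Action on h*: w(e_{n+1-k}) = sgn(w(k)) e_{n+1-|w(k)|}, extended linearly.\<close>
definition weyl_act :: "nat \<Rightarrow> (int \<Rightarrow> int) \<Rightarrow> (nat \<Rightarrow> complex) \<Rightarrow> nat \<Rightarrow> complex" where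
  "weyl_act n w \<mu> = (\<lambda>j. \<Sum>k=1..n.
      (if int n + 1 - \<bar>w (int k)\<bar> = int j
       then of_int (sgn (w (int k))) * \<mu> (n + 1 - k) else 0))"

definition lam_minus :: "nat \<Rightarrow> (nat \<Rightarrow> complex) \<Rightarrow> complex list" where
  "lam_minus n lam = map lam [1..<n+1] @ map (\<lambda>i. - lam i) (rev [1..<n+1])"

definition minus_vec :: "nat \<Rightarrow> (int \<Rightarrow> int) \<Rightarrow> int list" where
  "minus_vec n w = map (\<lambda>k. - w (int k)) (rev [1..<n+1]) @ map (\<lambda>k. w (int k)) [1..<n+1]"

fun row_ins :: "'a::linorder \<Rightarrow> 'a list \<Rightarrow> 'a list \<times> 'a option" where
  "row_ins x [] = ([x], None)"
| "row_ins x (y # ys) =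
     (if x < y then (x # ys, Some y)
      else (case row_ins x ys of (r, b) \<Rightarrow> (y # r, b)))"

fun tab_ins :: "'a::linorder \<Rightarrow> 'a list list \<Rightarrow> 'a list list" where
  "tab_ins x [] = [[x]]"
| "tab_ins x (r # rs) =
     (case row_ins x r of
        (r', None) \<Rightarrow> r' # rs
      | (r', Some y) \<Rightarrow> r' # tab_ins y rs)"

definition rs_tableau :: "'a::linorder list \<Rightarrow> 'a list list" where
  "rs_tableau xs = foldl (\<lambda>T x. tab_ins x T) [] xs"

definition rs_shape :: "'a::linorder list \<Rightarrow> nat list" where
  "rs_shape xs = map length (rs_tableau xs)"

end

theory Submission
  imports Defs "HOL-Library.Multiset"
begin

fun addcell :: "nat \<Rightarrow> nat list \<Rightarrow> nat list" where
  "addcell 0 [] = [1]"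
| "addcell 0 (a # s) = Suc a # s"
| "addcell (Suc k) [] = [1]"
| "addcell (Suc k) (a # s) = a # addcell k s"

fun addm :: "'a \<Rightarrow> nat \<Rightarrow> 'a list list \<Rightarrow> 'a list list" where
  "addm m 0 [] = [[m]]"
| "addm m 0 (t # ts) = (t @ [m]) # ts"
| "addm m (Suc r) [] = [[m]]"
| "addm m (Suc r) (t # ts) = t # addm m r ts"

fun insrow :: "'a::linorder \<Rightarrow> 'a list list \<Rightarrow> nat" where
  "insrow x [] = 0"
| "insrow x (r # rs) = (case snd (row_ins x r) of None \<Rightarrow> 0 | Some y \<Rightarrow> Suc (insrow y rs))"

lemma row_ins_none: "(\<forall>y\<in>set r. \<not> x < y) \<Longrightarrow> row_ins x r = (r @ [x], None)"
  by (induction r) auto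

lemma row_ins_none_iff: "snd (row_ins x r) = None \<Longrightarrow> \<forall>y\<in>set r. \<not> x < y"
  by (induction r) (auto split: prod.splits if_splits)

lemma row_ins_some: "(\<exists>y\<in>set r. x < y) \<Longrightarrow> \<exists>y. snd (row_ins x r) = Some y"
  using row_ins_none_iff by fastforce

lemma row_ins_snd_none: "snd (row_ins x r) = None \<Longrightarrow> row_ins x r = (r @ [x], None)"
  by (induction r) (auto split: prod.splits if_splits)

lemma row_ins_snd_some: "snd (row_ins x r) = Some y \<Longrightarrow> y \<in> set r \<and> x < y \<and> length (fst (row_ins x r)) = length r"
  by (induction r) (auto split: prod.splits if_splits)

lemma row_ins_set: "row_ins x r = (r', b) \<Longrightarrow> mset r' + (case b of None \<Rightarrow> {#} | Some y \<Rightarrow> {#y#}) = add_mset x (mset r)"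
  by (induction r arbitrary: r' b) (auto split: prod.splits if_splits option.splits)

lemma tab_ins_mset: "mset (concat (tab_ins x T)) = add_mset x (mset (concat T))"
proof (induction T arbitrary: x)
  case Nil then show ?case by simp
next
  case (Cons r rs)
  obtain r' b where rb: "row_ins x r = (r', b)" by fastforce
  show ?case
  proof (cases b)
    case None then show ?thesis using row_ins_set[OF rb] rb by simp
  next
    case (Some y) then show ?thesis using row_ins_set[OF rb] rb Cons.IH[of y] by (simp add: algebra_simps)
  qed
qed

lemma tab_ins_set: "set (concat (tab_ins x T)) = insert x (set (concat T))"
  by (metis set_mset_mset set_mset_add_mset_insert tab_ins_mset)

lemma rs_tableau_snoc: "rs_tableau (xs @ [x]) = tab_ins x (rs_tableau xs)"
  by (simp add: rs_tableau_def)

lemma rs_tableau_set: "set (concat (rs_tableau xs)) = set xs"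
proof (induction xs rule: rev_induct)
  case (snoc x xs) then show ?case by (simp only: rs_tableau_snoc tab_ins_set) simp
qed (simp add: rs_tableau_def)

lemma rs_tableau_mset: "mset (concat (rs_tableau xs)) = mset xs"
proof (induction xs rule: rev_induct)
  case (snoc x xs) then show ?case by (simp only: rs_tableau_snoc tab_ins_mset) simp
qed (simp add: rs_tableau_def)

lemma rs_tableau_distinct: "distinct xs \<Longrightarrow> distinct (concat (rs_tableau xs))"
  using mset_eq_imp_distinct_iff[OF rs_tableau_mset] by blast

lemma tab_ins_shape: "map length (tab_ins x T) = addcell (insrow x T) (map length T)"
proof (induction T arbitrary: x)
  case Nil then show ?case by simp
next
  case (Cons r rs)
  show ?case
  proof (cases "snd (row_ins x r)")
    case None then show ?thesis using row_ins_snd_none[OF None] by simp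
  next
    case (Some y)
    then obtain r' where rb: "row_ins x r = (r', Some y)" by (metis prod.collapse)
    then show ?thesis using row_ins_snd_some[OF Some] Cons.IH[of y] by simp
  qed
qed

lemma insrow_le: "insrow x T \<le> length T"
  by (induction T arbitrary: x) (auto split: option.splits)

lemma addcell_length: "k \<le> length s \<Longrightarrow> length (addcell k s) = (if k = length s then Suc (length s) else length s)"
  by (induction k s rule: addcell.induct) auto

lemma addm_shape: "map length (addm m r T) = addcell r (map length T)"
  by (induction m r T rule: addm.induct) auto

lemma row_ins_snoc: "x < m \<Longrightarrow> row_ins x (t @ [m]) =
   (if \<exists>y\<in>set t. x < y then (fst (row_ins x t) @ [m], snd (row_ins x t)) else (t @ [x], Some m))"
  by (induction t) (auto split: prod.splits)

lemma tab_ins_max: assumes "\<forall>y\<in>set (concat T). y \<le> m" shows "tab_ins m T = addm m 0 T"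
proof (cases T)
  case (Cons a list)
  have "\<forall>y\<in>set a. \<not> m < y" using assms Cons by (auto simp: not_less)
  then show ?thesis using Cons by (simp add: row_ins_none)
qed simp

lemma lemmaB:
  "r \<le> length T \<Longrightarrow> x < m \<Longrightarrow> \<forall>y\<in>set (concat T). y < m \<Longrightarrow>
   tab_ins x (addm m r T) = addm m (if insrow x T = r then Suc r else r) (tab_ins x T)"
proof (induction T arbitrary: x r)
  case Nil then show ?case by simp
next
  case (Cons t ts)
  show ?case
  proof (cases r)
    case 0
    show ?thesis
    proof (cases "\<exists>y\<in>set t. x < y")
      case True
      then obtain y where y: "snd (row_ins x t) = Some y" using row_ins_some by blast
      then obtain t' where e: "row_ins x t = (t', Some y)" by (metis prod.collapse)
      show ?thesis using True 0 Cons.prems y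
        by (simp add: row_ins_snoc e)
    next
      case False
      have "tab_ins m ts = addm m 0 ts" using Cons.prems by (intro tab_ins_max) (auto intro: less_imp_le)
      then show ?thesis using False 0 Cons.prems by (simp add: row_ins_snoc row_ins_none)
    qed
  next
    case (Suc r0)
    show ?thesis
    proof (cases "snd (row_ins x t)")
      case None
      then show ?thesis using Suc by (simp add: row_ins_snd_none[OF None])
    next
      case (Some y)
      then obtain t' where e: "row_ins x t = (t', Some y)" by (metis prod.collapse)
      have yt: "y \<in> set t" using row_ins_snd_some[OF Some] by simp
      have IH: "tab_ins y (addm m r0 ts) = addm m (if insrow y ts = r0 then Suc r0 else r0) (tab_ins y ts)"
        using Cons.prems Suc yt by (intro Cons.IH) auto
      show ?thesis using Suc IH by (simp add: e)
    qed
  qed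
qed

lemma tab_ins_length_ge: "length T \<le> length (tab_ins x T)"
  using tab_ins_shape[of x T] insrow_le[of x T] addcell_length[of "insrow x T" "map length T"]
  by (metis le_refl length_map nat_le_linear not_less_eq_eq)

lemma lemmaB_bound:
  assumes "r \<le> length T"
  shows "(if insrow x T = r then Suc r else r) \<le> length (tab_ins x T)"
proof -
  have L: "length (tab_ins x T) = (if insrow x T = length T then Suc (length T) else length T)"
    using tab_ins_shape[of x T] insrow_le[of x T] addcell_length[of "insrow x T" "map length T"]
    by (metis length_map)
  show ?thesis using assms L insrow_le[of x T] by auto
qed

lemma lemmaA:
  fixes u :: "'a::linorder list"
  shows "distinct u \<Longrightarrow> m \<in> set u \<Longrightarrow> \<forall>y\<in>set u. y \<le> m \<Longrightarrow>
   \<exists>r \<le> length (rs_tableau (removeAll m u)). rs_tableau u = addm m r (rs_tableau (removeAll m u))"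
proof (induction u rule: rev_induct)
  case Nil then show ?case by simp
next
  case (snoc a v)
  show ?case
  proof (cases "a = m")
    case True
    then have mv: "m \<notin> set v" using snoc.prems by simp
    then have rv: "removeAll m (v @ [a]) = v" using True by simp
    have "rs_tableau (v @ [a]) = addm m 0 (rs_tableau v)"
      using True snoc.prems by (simp only: rs_tableau_snoc) (rule tab_ins_max, simp only: rs_tableau_set, simp)
    then show ?thesis unfolding rv by (intro exI[of _ 0]) simp
  next
    case False
    then have am: "a < m" using snoc.prems by fastforce
    have mv: "m \<in> set v" using snoc.prems False by simp
    obtain r where r: "r \<le> length (rs_tableau (removeAll m v))"
      "rs_tableau v = addm m r (rs_tableau (removeAll m v))"
      using snoc.IH[OF _ mv] snoc.prems by auto
    have lt: "\<forall>y\<in>set (concat (rs_tableau (removeAll m v))). y < m"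
      using snoc.prems False unfolding rs_tableau_set by auto
    have rr: "removeAll m (v @ [a]) = removeAll m v @ [a]" using False by simp
    have "rs_tableau (v @ [a]) = addm m (if insrow a (rs_tableau (removeAll m v)) = r then Suc r else r)
       (rs_tableau (removeAll m (v @ [a])))"
      unfolding rr rs_tableau_snoc r(2) by (rule lemmaB[OF r(1) am lt])
    then show ?thesis
      using lemmaB_bound[OF r(1), of a] unfolding rr rs_tableau_snoc by blast
  qed
qed

fun lmax :: "nat list \<Rightarrow> nat list \<Rightarrow> nat list" where
  "lmax [] ys = ys"
| "lmax xs [] = xs"
| "lmax (x # xs) (y # ys) = max x y # lmax xs ys"

lemma lmax_self: "lmax xs xs = xs"
proof (induction xs)
  case (Cons a xs) then show ?case by simp
qed simp

lemma lmax_comm: "lmax xs ys = lmax ys xs"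
proof (induction xs arbitrary: ys)
  case Nil then show ?case by (cases ys) auto
next
  case (Cons a xs) then show ?case by (cases ys) (auto simp: max.commute)
qed

lemma lmax_addcell: "lmax s (addcell k s) = addcell k s"
  by (induction k s rule: addcell.induct) (auto simp: lmax_self)

lemma lmax_addcell2: "r \<noteq> k \<Longrightarrow> r \<le> length s \<Longrightarrow> k \<le> length s \<Longrightarrow>
   lmax (addcell r s) (addcell k s) = addcell r (addcell k s)"
proof (induction s arbitrary: r k)
  case Nil then show ?case by auto
next
  case (Cons a s)
  show ?case
  proof (cases r)
    case 0
    then obtain k0 where "k = Suc k0" using Cons by (cases k) auto
    then show ?thesis using 0 lmax_addcell[of s k0] lmax_comm by simp
  next
    case (Suc r0)
    show ?thesis
    proof (cases k)
      case 0 then show ?thesis using Suc lmax_addcell[of s r0] lmax_comm by simp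
    next
      case (Suc k0) then show ?thesis using \<open>r = Suc r0\<close> Cons by simp
    qed
  qed
qed

lemma addcell_inj: "k \<le> length s \<Longrightarrow> r \<le> length s \<Longrightarrow> addcell k s = addcell r s \<Longrightarrow> k = r"
proof (induction s arbitrary: r k)
  case Nil then show ?case by simp
next
  case (Cons a s)
  then show ?case by (cases k; cases r) auto
qed

lemma addcell_neq: "addcell k s \<noteq> s"
  by (induction k s rule: addcell.induct) auto

definition rowof :: "nat list \<Rightarrow> nat list \<Rightarrow> nat" where
  "rowof \<rho> \<mu> = (THE r. r \<le> length \<rho> \<and> \<mu> = addcell r \<rho>)"

lemma rowof_addcell: "r \<le> length \<rho> \<Longrightarrow> rowof \<rho> (addcell r \<rho>) = r"
  unfolding rowof_def by (rule the_equality) (auto dest: addcell_inj)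

definition Floc :: "nat list \<Rightarrow> nat list \<Rightarrow> nat list \<Rightarrow> bool \<Rightarrow> nat list" where
  "Floc \<rho> \<mu> \<nu> x = (if x then addcell 0 \<rho> else if \<mu> = \<nu> \<and> \<mu> \<noteq> \<rho> then addcell (Suc (rowof \<rho> \<mu>)) \<mu>
     else lmax \<mu> \<nu>)"

lemma Floc_sym: "Floc \<rho> \<mu> \<nu> x = Floc \<rho> \<nu> \<mu> x"
  unfolding Floc_def using lmax_comm by auto

definition sh :: "nat list \<Rightarrow> nat \<Rightarrow> nat \<Rightarrow> nat list" where
  "sh u i j = rs_shape (filter (\<lambda>v. v < j) (take i u))"

lemma rs_shape_tab: "rs_shape xs = map length (rs_tableau xs)"
  by (simp add: rs_shape_def)

lemma gstep:
  assumes "distinct l" "j \<in> set l"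
  shows "\<exists>r \<le> length (rs_tableau (filter (\<lambda>v. v < j) l)).
     rs_tableau (filter (\<lambda>v. v < Suc j) l) = addm j r (rs_tableau (filter (\<lambda>v. v < j) l))"
proof -
  have e: "removeAll j (filter (\<lambda>v. v < Suc j) l) = filter (\<lambda>v. v < j) l"
    by (induction l) auto
  have "\<exists>r \<le> length (rs_tableau (removeAll j (filter (\<lambda>v. v < Suc j) l))).
     rs_tableau (filter (\<lambda>v. v < Suc j) l) = addm j r (rs_tableau (removeAll j (filter (\<lambda>v. v < Suc j) l)))"
    using assms by (intro lemmaA) auto
  then show ?thesis unfolding e .
qed

lemma gstep0: "j \<notin> set l \<Longrightarrow> filter (\<lambda>v. v < Suc j) l = filter (\<lambda>v. v < j) l"
  by (induction l) auto

lemma local_rule: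
  assumes du: "distinct u" and i: "i < length u"
  shows "sh u (Suc i) (Suc j) = Floc (sh u i j) (sh u i (Suc j)) (sh u (Suc i) j) (u ! i = j)"
proof -
  define a where "a = u ! i"
  define l where "l = take i u"
  have tk: "take (Suc i) u = l @ [a]" unfolding l_def a_def using i by (simp add: take_Suc_conv_app_nth)
  have dl: "distinct (l @ [a])" using du tk by (metis distinct_take)
  define P where "P = rs_tableau (filter (\<lambda>v. v < j) l)"
  define \<rho> where "\<rho> = map length P"
  have rho: "sh u i j = \<rho>" unfolding sh_def \<rho>_def P_def l_def rs_shape_tab ..
  show ?thesis
  proof (cases "j < a")
    case True
    have e1: "sh u (Suc i) (Suc j) = sh u i (Suc j)" unfolding sh_def tk l_def using True by simp
    have e2: "sh u (Suc i) j = sh u i j" unfolding sh_def tk l_def using True by simp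
    have "lmax (sh u i (Suc j)) \<rho> = sh u i (Suc j)"
    proof (cases "j \<in> set l")
      case True
      then obtain r where "rs_tableau (filter (\<lambda>v. v < Suc j) l) = addm j r P"
        using gstep[of l j] dl unfolding P_def by auto
      then have "sh u i (Suc j) = addcell r \<rho>" unfolding sh_def rs_shape_tab l_def[symmetric] \<rho>_def
        by (simp add: addm_shape)
      then show ?thesis using lmax_addcell lmax_comm by metis
    next
      case False
      then have "sh u i (Suc j) = \<rho>" using rho unfolding sh_def l_def[symmetric] by (simp add: gstep0)
      then show ?thesis by (simp add: lmax_self)
    qed
    then show ?thesis using True e1 e2 rho unfolding Floc_def a_def by auto
  next
    case False
    show ?thesis
    proof (cases "a = j")
      case True
      have jl: "j \<notin> set l" using dl True by simp
      have lt: "\<forall>y\<in>set (concat P). y \<le> j" unfolding P_def rs_tableau_set by auto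
      have "sh u (Suc i) (Suc j) = map length (tab_ins j P)"
        unfolding sh_def tk rs_shape_tab P_def using True gstep0[OF jl] by (simp add: rs_tableau_snoc)
      also have "\<dots> = addcell 0 \<rho>" unfolding tab_ins_max[OF lt] addm_shape \<rho>_def ..
      finally show ?thesis using True rho unfolding Floc_def a_def by simp
    next
      case False
      then have aj: "a < j" using \<open>\<not> j < a\<close> by simp
      define k where "k = insrow a P"
      have nu: "sh u (Suc i) j = addcell k \<rho>"
        unfolding sh_def tk rs_shape_tab using aj
        by (simp add: rs_tableau_snoc P_def[symmetric] tab_ins_shape k_def \<rho>_def)
      have kle: "k \<le> length \<rho>" unfolding k_def \<rho>_def using insrow_le by simp
      show ?thesis
      proof (cases "j \<in> set l")
        case False
        have mu: "sh u i (Suc j) = \<rho>" using rho False unfolding sh_def l_def[symmetric] by (simp add: gstep0)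
        have lam: "sh u (Suc i) (Suc j) = sh u (Suc i) j"
          unfolding sh_def tk using False aj by (simp add: gstep0)
        show ?thesis unfolding Floc_def mu lam nu rho using aj a_def addcell_neq lmax_addcell by auto
      next
        case True
        then obtain r where r: "r \<le> length P" "rs_tableau (filter (\<lambda>v. v < Suc j) l) = addm j r P"
          using gstep[of l j] dl unfolding P_def by auto
        have mu: "sh u i (Suc j) = addcell r \<rho>" unfolding sh_def rs_shape_tab l_def[symmetric] \<rho>_def r(2)
          by (simp add: addm_shape)
        have lt: "\<forall>y\<in>set (concat P). y < j" unfolding P_def rs_tableau_set by auto
        have "sh u (Suc i) (Suc j) = map length (tab_ins a (addm j r P))"
          unfolding sh_def tk rs_shape_tab using aj by (simp add: rs_tableau_snoc r(2))
        also have "\<dots> = addcell (if k = r then Suc r else r) (addcell k \<rho>)"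
          unfolding lemmaB[OF r(1) aj lt] addm_shape tab_ins_shape k_def \<rho>_def ..
        finally have lam: "sh u (Suc i) (Suc j) = addcell (if k = r then Suc r else r) (addcell k \<rho>)" .
        have rle: "r \<le> length \<rho>" using r(1) unfolding \<rho>_def by simp
        show ?thesis
        proof (cases "k = r")
          case True
          then show ?thesis unfolding Floc_def lam mu nu rho using aj a_def addcell_neq rowof_addcell[OF rle] by auto
        next
          case False
          have "addcell r \<rho> \<noteq> addcell k \<rho>" using addcell_inj[OF kle rle] False by metis
          then show ?thesis unfolding Floc_def lam mu nu rho using aj a_def False lmax_addcell2[OF _ rle kle] by auto
        qed
      qed
    qed
  qed
qed

lemma rs_shape_Nil: "rs_shape [] = []" by (simp add: rs_shape_def rs_tableau_def)

theorem rs_symmetry: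
  fixes u v :: "nat list"
  assumes lu: "length u = N" and lv: "length v = N" and du: "distinct u" and dv: "distinct v"
    and su: "set u \<subseteq> {..<N}" and sv: "set v \<subseteq> {..<N}"
    and inv: "\<And>i j. i < N \<Longrightarrow> j < N \<Longrightarrow> (u ! i = j) = (v ! j = i)"
  shows "rs_shape u = rs_shape v"
proof -
  have main: "\<forall>j \<le> N. sh u i j = sh v j i" if "i \<le> N" for i
    using that
  proof (induction i)
    case 0 then show ?case by (auto simp: sh_def rs_shape_Nil)
  next
    case (Suc i)
    have IHo: "\<forall>j\<le>N. sh u i j = sh v j i" using Suc.IH Suc.prems by simp
    show ?case
    proof (intro allI impI)
      fix j assume "j \<le> N"
      then show "sh u (Suc i) j = sh v j (Suc i)"
      proof (induction j)
        case 0 then show ?case by (auto simp: sh_def rs_shape_Nil)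
      next
        case (Suc j)
        have iN: "i < N" and jN: "j < N" using Suc.prems \<open>Suc i \<le> N\<close> by auto
        have "sh u (Suc i) (Suc j) = Floc (sh u i j) (sh u i (Suc j)) (sh u (Suc i) j) (u ! i = j)"
          using local_rule[OF du] iN lu by simp
        also have "\<dots> = Floc (sh v j i) (sh v (Suc j) i) (sh v j (Suc i)) (v ! j = i)"
        proof -
          have "sh u i j = sh v j i" using IHo jN by simp
          moreover have "sh u i (Suc j) = sh v (Suc j) i" using IHo Suc.prems by simp
          moreover have "sh u (Suc i) j = sh v j (Suc i)" using Suc.IH Suc.prems by simp
          ultimately show ?thesis using inv[OF iN jN] by simp
        qed
        also have "\<dots> = sh v (Suc j) (Suc i)"
          using local_rule[OF dv, of j i] jN lv Floc_sym by simp
        finally show ?case .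
      qed
    qed
  qed
  have "sh u N N = sh v N N" using main[of N] by simp
  moreover have "sh u N N = rs_shape u" unfolding sh_def using lu su
    by (simp add: subset_iff filter_id_conv)
  moreover have "sh v N N = rs_shape v" unfolding sh_def using lv sv
    by (simp add: subset_iff filter_id_conv)
  ultimately show ?thesis by simp
qed

fun Hrec :: "('a::linorder \<Rightarrow> 'b::linorder) \<Rightarrow> 'a list list \<Rightarrow> bool" where
  "Hrec f [] = True"
| "Hrec f (t # ts) = ((\<forall>a\<in>set t. \<forall>b\<in>set (concat ts). f a = f b \<longrightarrow> b < a) \<and> Hrec f ts)"

definition monoS :: "('a::linorder \<Rightarrow> 'b::linorder) \<Rightarrow> 'a set \<Rightarrow> bool" where
  "monoS f S = (\<forall>a\<in>S. \<forall>b\<in>S. a \<le> b \<longrightarrow> f a \<le> f b)"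

lemma monoS_sub: "monoS f S \<Longrightarrow> T \<subseteq> S \<Longrightarrow> monoS f T"
  unfolding monoS_def by blast

lemma row_map:
  "(\<forall>y\<in>set r. f y = f x \<longrightarrow> y < x) \<Longrightarrow> x \<notin> set r \<Longrightarrow> monoS f (insert x (set r)) \<Longrightarrow>
   row_ins (f x) (map f r) = (map f (fst (row_ins x r)), map_option f (snd (row_ins x r)))"
proof (induction r)
  case Nil then show ?case by simp
next
  case (Cons y ys)
  have IH: "row_ins (f x) (map f ys) = (map f (fst (row_ins x ys)), map_option f (snd (row_ins x ys)))"
    using Cons by (intro Cons.IH) (auto elim: monoS_sub)
  show ?case
  proof (cases "x < y")
    case True
    then have "f x \<le> f y" using Cons.prems unfolding monoS_def by auto
    moreover have "f y \<noteq> f x" using Cons.prems True by auto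
    ultimately show ?thesis using True by simp
  next
    case False
    then have "y < x" using Cons.prems by (metis linorder_neqE list.set_intros(1))
    then have "f y \<le> f x" using Cons.prems unfolding monoS_def by auto
    then show ?thesis using False IH by (auto split: prod.splits)
  qed
qed

lemma tab_map:
  "Hrec f T \<Longrightarrow> distinct (concat T) \<Longrightarrow> x \<notin> set (concat T) \<Longrightarrow>
   (\<forall>y\<in>set (concat T). f y = f x \<longrightarrow> y < x) \<Longrightarrow> monoS f (insert x (set (concat T))) \<Longrightarrow>
   tab_ins (f x) (map (map f) T) = map (map f) (tab_ins x T)"
proof (induction T arbitrary: x)
  case Nil then show ?case by simp
next
  case (Cons t ts)
  have rm: "row_ins (f x) (map f t) = (map f (fst (row_ins x t)), map_option f (snd (row_ins x t)))"
    using Cons.prems by (intro row_map) (auto elim: monoS_sub)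
  show ?case
  proof (cases "snd (row_ins x t)")
    case None
    then obtain t' where e: "row_ins x t = (t', None)" by (metis prod.collapse)
    show ?thesis using rm by (simp add: e)
  next
    case (Some y)
    then obtain t' where e: "row_ins x t = (t', Some y)" by (metis prod.collapse)
    have yt: "y \<in> set t" using row_ins_snd_some[OF Some] by simp
    have IH: "tab_ins (f y) (map (map f) ts) = map (map f) (tab_ins y ts)"
    proof (rule Cons.IH)
      show "Hrec f ts" using Cons.prems by simp
      show "distinct (concat ts)" using Cons.prems by simp
      show "y \<notin> set (concat ts)" using Cons.prems yt by auto
      show "\<forall>z\<in>set (concat ts). f z = f y \<longrightarrow> z < y" using Cons.prems yt by auto
      show "monoS f (insert y (set (concat ts)))" using Cons.prems yt by (auto elim!: monoS_sub)
    qed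
    show ?thesis using rm IH by (simp add: e)
  qed
qed

lemma row_sorted: "sorted_wrt (<) t \<Longrightarrow> x \<notin> set t \<Longrightarrow> sorted_wrt (<) (fst (row_ins x t))"
proof (induction t)
  case Nil then show ?case by simp
next
  case (Cons z zs)
  show ?case
  proof (cases "x < z")
    case True then show ?thesis using Cons.prems by auto
  next
    case False
    then have zx: "z < x" using Cons.prems by auto
    have s: "set (fst (row_ins x zs)) \<subseteq> insert x (set zs)"
      using row_ins_set[of x zs "fst (row_ins x zs)" "snd (row_ins x zs)"]
      by (metis (no_types, lifting) prod.collapse set_mset_add_mset_insert set_mset_mset set_mset_union sup_ge1)
    have "sorted_wrt (<) (fst (row_ins x zs))" using Cons by simp
    then show ?thesis using False zx s Cons.prems by (auto split: prod.splits)
  qed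
qed

lemma row_RB: "sorted_wrt (<) t \<Longrightarrow> snd (row_ins x t) = Some y \<Longrightarrow> \<forall>a\<in>set t. a < y \<longrightarrow> \<not> x < a"
proof (induction t)
  case Nil then show ?case by simp
next
  case (Cons z zs)
  show ?case
  proof (cases "x < z")
    case True then show ?thesis using Cons.prems by auto
  next
    case False
    then have "snd (row_ins x zs) = Some y" using Cons.prems by (auto split: prod.splits)
    then show ?thesis using Cons False by auto
  qed
qed

lemma row_set_some: "distinct t \<Longrightarrow> snd (row_ins x t) = Some y \<Longrightarrow> a \<in> set (fst (row_ins x t)) \<Longrightarrow> a = x \<or> (a \<in> set t \<and> a \<noteq> y)"
proof (induction t)
  case Nil then show ?case by simp
next
  case (Cons z zs)
  show ?case
  proof (cases "x < z")
    case True then show ?thesis using Cons.prems by auto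
  next
    case False
    then have s: "snd (row_ins x zs) = Some y" using Cons.prems by (auto split: prod.splits)
    then have "y \<in> set zs" using row_ins_snd_some by blast
    then show ?thesis using Cons False s by (auto split: prod.splits)
  qed
qed

lemma tab_sorted: "\<forall>r\<in>set T. sorted_wrt (<) r \<Longrightarrow> x \<notin> set (concat T) \<Longrightarrow> distinct (concat T) \<Longrightarrow>
  \<forall>r\<in>set (tab_ins x T). sorted_wrt (<) r"
proof (induction T arbitrary: x)
  case Nil then show ?case by simp
next
  case (Cons t ts)
  have st: "sorted_wrt (<) (fst (row_ins x t))" using Cons.prems by (intro row_sorted) auto
  show ?case
  proof (cases "snd (row_ins x t)")
    case None
    then obtain t' where e: "row_ins x t = (t', None)" by (metis prod.collapse)
    show ?thesis using st Cons.prems by (simp add: e)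
  next
    case (Some y)
    then obtain t' where e: "row_ins x t = (t', Some y)" by (metis prod.collapse)
    have yt: "y \<in> set t" using row_ins_snd_some[OF Some] by simp
    have "\<forall>r\<in>set (tab_ins y ts). sorted_wrt (<) r"
      using Cons.prems yt by (intro Cons.IH) auto
    then show ?thesis using st by (simp add: e)
  qed
qed

lemma tab_H:
  "Hrec f T \<Longrightarrow> distinct (concat T) \<Longrightarrow> x \<notin> set (concat T) \<Longrightarrow> \<forall>r\<in>set T. sorted_wrt (<) r \<Longrightarrow>
   (\<forall>y\<in>set (concat T). f y = f x \<longrightarrow> y < x) \<Longrightarrow> monoS f (insert x (set (concat T))) \<Longrightarrow>
   Hrec f (tab_ins x T)"
proof (induction T arbitrary: x)
  case Nil then show ?case by simp
next
  case (Cons t ts)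
  show ?case
  proof (cases "snd (row_ins x t)")
    case None
    then have e: "row_ins x t = (t @ [x], None)" by (rule row_ins_snd_none)
    show ?thesis using Cons.prems by (auto simp: e)
  next
    case (Some y)
    then obtain t' where e: "row_ins x t = (t', Some y)" by (metis prod.collapse)
    have yt: "y \<in> set t" and xy: "x < y" using row_ins_snd_some[OF Some] by auto
    have IH: "Hrec f (tab_ins y ts)"
    proof (rule Cons.IH)
      show "Hrec f ts" using Cons.prems by simp
      show "distinct (concat ts)" using Cons.prems by simp
      show "y \<notin> set (concat ts)" using Cons.prems yt by auto
      show "\<forall>z\<in>set (concat ts). f z = f y \<longrightarrow> z < y" using Cons.prems yt by auto
      show "monoS f (insert y (set (concat ts)))" using Cons.prems yt by (auto elim!: monoS_sub)
      show "\<forall>r\<in>set ts. sorted_wrt (<) r" using Cons.prems by simp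
    qed
    have M: "monoS f (insert x (set (concat (t # ts))))" using Cons.prems by simp
    have fxy: "f x < f y"
    proof -
      have "f x \<le> f y" using M xy yt unfolding monoS_def by auto
      moreover have "f y \<noteq> f x" using Cons.prems(5) yt xy by auto
      ultimately show ?thesis by simp
    qed
    have dt: "distinct t" using Cons.prems by simp
    have RB: "\<forall>a\<in>set t. a < y \<longrightarrow> \<not> x < a" using row_RB[OF _ Some] Cons.prems by simp
    have C: "f a = f c \<longrightarrow> c < a" if a: "a \<in> set t'" and c: "c \<in> set (concat (tab_ins y ts))" for a c
    proof -
      have a': "a = x \<or> (a \<in> set t \<and> a \<noteq> y)" using row_set_some[OF dt Some] a e by simp
      have c': "c = y \<or> c \<in> set (concat ts)" using c unfolding tab_ins_set by simp
      show ?thesis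
      proof (cases "c = y")
        case True
        show ?thesis
        proof
          assume fa: "f a = f c"
          have at: "a \<in> set t" "a \<noteq> y" using a' fa fxy True by auto
          show "c < a"
          proof (rule ccontr)
            assume "\<not> c < a"
            then have "a < y" using at True by auto
            then have "\<not> x < a" using RB at by auto
            moreover have "a \<noteq> x" using Cons.prems(3) at by auto
            ultimately have "a < x" by auto
            then have "f a \<le> f x" using M at unfolding monoS_def by auto
            then show False using fa fxy True by simp
          qed
        qed
      next
        case False
        then have cts: "c \<in> set (concat ts)" using c' by simp
        show ?thesis using a' cts Cons.prems(1,5) by auto
      qed
    qed
    show ?thesis using IH C by (simp add: e)
  qed
qed

lemma rs_sorted: "distinct xs \<Longrightarrow> \<forall>r\<in>set (rs_tableau xs). sorted_wrt (<) r"
proof (induction xs rule: rev_induct)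
  case Nil then show ?case by (simp add: rs_tableau_def)
next
  case (snoc x xs)
  show ?case unfolding rs_tableau_snoc
    using snoc rs_tableau_distinct[of xs] rs_tableau_set[of xs] by (intro tab_sorted) auto
qed

lemma std_main:
  fixes xs :: "'a::linorder list" and f :: "'a \<Rightarrow> 'b::linorder"
  shows "distinct xs \<Longrightarrow> monoS f (set xs) \<Longrightarrow>
    (\<forall>p q. p < q \<longrightarrow> q < length xs \<longrightarrow> f (xs ! p) = f (xs ! q) \<longrightarrow> xs ! p < xs ! q) \<Longrightarrow>
    Hrec f (rs_tableau xs) \<and> rs_tableau (map f xs) = map (map f) (rs_tableau xs)"
proof (induction xs rule: rev_induct)
  case Nil then show ?case by (simp add: rs_tableau_def)
next
  case (snoc x xs)
  have ties: "\<forall>p q. p < q \<longrightarrow> q < length xs \<longrightarrow> f (xs ! p) = f (xs ! q) \<longrightarrow> xs ! p < xs ! q"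
  proof (intro allI impI)
    fix p q assume "p < q" "q < length xs" "f (xs ! p) = f (xs ! q)"
    then show "xs ! p < xs ! q" using snoc.prems(3)[rule_format, of p q]
      by (simp add: nth_append)
  qed
  have IH: "Hrec f (rs_tableau xs) \<and> rs_tableau (map f xs) = map (map f) (rs_tableau xs)"
    using snoc.prems ties by (intro snoc.IH) (auto elim: monoS_sub)
  have K: "\<forall>y\<in>set (concat (rs_tableau xs)). f y = f x \<longrightarrow> y < x"
  proof (intro ballI impI)
    fix y assume "y \<in> set (concat (rs_tableau xs))" "f y = f x"
    then have "y \<in> set xs" unfolding rs_tableau_set by simp
    then obtain p where p: "p < length xs" "xs ! p = y" by (auto simp: in_set_conv_nth)
    show "y < x" using snoc.prems(3)[rule_format, of p "length xs"] p \<open>f y = f x\<close>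
      by (simp add: nth_append)
  qed
  have D: "distinct (concat (rs_tableau xs))" using snoc.prems(1) rs_tableau_distinct[of xs] by simp
  have X: "x \<notin> set (concat (rs_tableau xs))" unfolding rs_tableau_set using snoc.prems by simp
  have M: "monoS f (insert x (set (concat (rs_tableau xs))))" unfolding rs_tableau_set using snoc.prems by simp
  have S: "\<forall>r\<in>set (rs_tableau xs). sorted_wrt (<) r" using snoc.prems(1) rs_sorted[of xs] by simp
  show ?case unfolding rs_tableau_snoc map_append list.map
    using tab_map[OF _ D X K M] tab_H[OF _ D X S K M] IH by simp
qed

theorem std_shape:
  fixes xs :: "'a::linorder list" and f :: "'a \<Rightarrow> 'b::linorder"
  assumes "distinct xs" "monoS f (set xs)"
    "\<And>p q. p < q \<Longrightarrow> q < length xs \<Longrightarrow> f (xs ! p) = f (xs ! q) \<Longrightarrow> xs ! p < xs ! q"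
  shows "rs_shape (map f xs) = rs_shape xs"
  using std_main[of xs f] assms unfolding rs_shape_def by (simp add: comp_def)

definition swp :: "int \<Rightarrow> int \<Rightarrow> int \<Rightarrow> int" where
  "swp p q x = (if x = p then q else if x = q then p else x)"

definition INV :: "int set \<Rightarrow> (int \<Rightarrow> int) \<Rightarrow> int" where
  "INV D u = (\<Sum>(a,b)\<in>D \<times> D. if a < b \<and> u b < u a then 1 else 0)"

lemma swp_swp: "swp p q (swp p q x) = x"
  unfolding swp_def by auto

lemma inv_swap:
  assumes fin: "finite D" and pD: "p \<in> D" and qD: "q \<in> D" and pq: "p < q"
    and adj: "\<forall>c\<in>D. \<not> (p < c \<and> c < q)"
  shows "INV D (u \<circ> swp p q) = INV D u - (if u q < u p then 1 else 0) + (if u p < u q then 1 else 0)"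
proof -
  let ?t = "swp p q"
  let ?S = "D \<times> D"
  let ?E = "{(p,q),(q,p)}"
  define g2 where "g2 = (\<lambda>(a,b). if ?t a < ?t b \<and> u b < u a then 1 else (0::int))"
  define g0 where "g0 = (\<lambda>(a,b). if a < b \<and> u b < u a then 1 else (0::int))"
  have tD: "?t x \<in> D" if "x \<in> D" for x using that pD qD unfolding swp_def by auto
  have s1: "INV D (u \<circ> ?t) = sum g2 ?S"
    unfolding INV_def g2_def
    by (rule sum.reindex_bij_witness[where i="\<lambda>(a,b). (?t a, ?t b)" and j="\<lambda>(a,b). (?t a, ?t b)"])
       (auto simp: swp_swp tD)
  have ES: "?E \<subseteq> ?S" using pD qD by auto
  have finS: "finite ?S" using fin by simp
  have eq: "g2 x = g0 x" if "x \<in> ?S - ?E" for x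
  proof -
    obtain a b where x0: "x = (a,b)" by fastforce
    have x: "x = (a,b)" "a \<in> D" "b \<in> D" "(a,b) \<noteq> (p,q)" "(a,b) \<noteq> (q,p)"
      using that x0 by auto
    have na: "\<not> (p < a \<and> a < q)" "\<not> (p < b \<and> b < q)" using adj x by auto
    have "(?t a < ?t b) = (a < b)"
      using x(4,5) na pq unfolding swp_def by auto
    then show ?thesis unfolding g2_def g0_def x by simp
  qed
  have "sum g2 ?S = sum g2 (?S - ?E) + sum g2 ?E" by (rule sum.subset_diff[OF ES finS])
  also have "sum g2 (?S - ?E) = sum g0 (?S - ?E)" using eq by (rule sum.cong[OF refl])
  also have "sum g2 ?E = (if u p < u q then 1 else 0)"
    using pq unfolding g2_def swp_def by auto
  finally have a: "sum g2 ?S = sum g0 (?S - ?E) + (if u p < u q then 1 else 0)" .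
  have "sum g0 ?S = sum g0 (?S - ?E) + sum g0 ?E" by (rule sum.subset_diff[OF ES finS])
  moreover have "sum g0 ?E = (if u q < u p then 1 else 0)"
    using pq unfolding g0_def by auto
  moreover have "INV D u = sum g0 ?S" unfolding INV_def g0_def ..
  ultimately show ?thesis using s1 a by simp
qed

definition Dn :: "nat \<Rightarrow> int set" where
  "Dn n = {x::int. 1 \<le> \<bar>x\<bar> \<and> \<bar>x\<bar> \<le> int n}"

definition NEG :: "nat \<Rightarrow> (int \<Rightarrow> int) \<Rightarrow> int" where
  "NEG n u = (\<Sum>i\<in>{1..int n}. if u i < 0 then 1 else 0)"

definition N2 :: "nat \<Rightarrow> (int \<Rightarrow> int) \<Rightarrow> int" where
  "N2 n u = INV (Dn n) u + NEG n u"

lemma finite_Dn: "finite (Dn n)"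
proof -
  have "Dn n \<subseteq> {-int n..int n}" unfolding Dn_def by auto
  then show ?thesis by (rule finite_subset) simp
qed

lemma sgen_decomp: "1 \<le> k \<Longrightarrow> sgen k = swp k (k+1) \<circ> swp (-(k+1)) (-k)"
  unfolding sgen_def swp_def by (rule ext) auto

lemma tgen_swp: "tgen = swp (-1) 1"
  unfolding tgen_def swp_def by (rule ext) auto

lemma INV_sgen:
  assumes "1 \<le> k" "k < int n"
  shows "INV (Dn n) (w \<circ> sgen k) = INV (Dn n) w
     - (if w (k+1) < w k then 1 else 0) + (if w k < w (k+1) then 1 else 0)
     - (if w (-k) < w (-(k+1)) then 1 else 0) + (if w (-(k+1)) < w (-k) then 1 else 0)"
proof -
  have e: "w \<circ> sgen k = (w \<circ> swp k (k+1)) \<circ> swp (-(k+1)) (-k)"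
    using sgen_decomp[OF assms(1)] by (simp add: comp_assoc)
  have a1: "INV (Dn n) (w \<circ> swp k (k+1)) = INV (Dn n) w
     - (if w (k+1) < w k then 1 else 0) + (if w k < w (k+1) then 1 else 0)"
    by (rule inv_swap[OF finite_Dn]) (use assms in \<open>auto simp: Dn_def\<close>)
  have a2: "INV (Dn n) ((w \<circ> swp k (k+1)) \<circ> swp (-(k+1)) (-k)) = INV (Dn n) (w \<circ> swp k (k+1))
     - (if (w \<circ> swp k (k+1)) (-k) < (w \<circ> swp k (k+1)) (-(k+1)) then 1 else 0)
     + (if (w \<circ> swp k (k+1)) (-(k+1)) < (w \<circ> swp k (k+1)) (-k) then 1 else 0)"
    by (rule inv_swap[OF finite_Dn]) (use assms in \<open>auto simp: Dn_def\<close>)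
  have b: "(w \<circ> swp k (k+1)) (-k) = w (-k)" "(w \<circ> swp k (k+1)) (-(k+1)) = w (-(k+1))"
    using assms unfolding swp_def by auto
  show ?thesis unfolding e a2 a1 b by simp
qed

lemma INV_tgen:
  "INV (Dn n) (w \<circ> tgen) = INV (Dn n) w - (if w 1 < w (-1) then 1 else 0) + (if w (-1) < w 1 then 1 else 0)"
  if "1 \<le> n"
  unfolding tgen_swp
  by (rule inv_swap[OF finite_Dn]) (use that in \<open>auto simp: Dn_def\<close>)

lemma NEG_sgen:
  assumes "1 \<le> k" "k < int n"
  shows "NEG n (w \<circ> sgen k) = NEG n w"
  unfolding NEG_def
  by (rule sum.reindex_bij_witness[where i="sgen k" and j="sgen k"])
     (use assms in \<open>auto simp: sgen_def\<close>)

lemma NEG_tgen: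
  assumes "1 \<le> n"
  shows "NEG n (w \<circ> tgen) = NEG n w - (if w 1 < 0 then 1 else 0) + (if w (-1) < 0 then 1 else 0)"
proof -
  have m: "1 \<in> {1..int n}" using assms by simp
  have "NEG n (w \<circ> tgen) = (if w (-1) < 0 then 1 else 0) + (\<Sum>i\<in>{1..int n} - {1}. if (w \<circ> tgen) i < 0 then 1 else 0)"
    unfolding NEG_def by (subst sum.remove[OF _ m]) (auto simp: tgen_def)
  also have "(\<Sum>i\<in>{1..int n} - {1}. if (w \<circ> tgen) i < 0 then 1 else (0::int)) = (\<Sum>i\<in>{1..int n} - {1}. if w i < 0 then 1 else 0)"
    by (rule sum.cong) (auto simp: tgen_def)
  also have "\<dots> = NEG n w - (if w 1 < 0 then 1 else 0)"
    unfolding NEG_def by (subst sum.remove[OF _ m]) auto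
  finally show ?thesis unfolding comp_def by linarith
qed

lemma N2_gen_le:
  assumes "1 \<le> n" "g \<in> generators n"
  shows "N2 n (w \<circ> g) \<le> N2 n w + 2"
proof -
  consider (s) k where "g = sgen (int k)" "1 \<le> k" "k < n" | (t) "g = tgen" using assms(2) unfolding generators_def by auto
  then show ?thesis
  proof cases
    case s
    have "1 \<le> int k" "int k < int n" using s by auto
    from INV_sgen[OF this, of w] NEG_sgen[OF this, of w] show ?thesis using s unfolding N2_def by auto
  next
    case t
    from INV_tgen[OF assms(1), of w] NEG_tgen[OF assms(1), of w] show ?thesis using t unfolding N2_def by auto
  qed
qed

lemma N2_sgen_desc:
  assumes "1 \<le> k" "k < int n" "\<forall>x. w (-x) = - w x" "w (k+1) < w k"
  shows "N2 n (w \<circ> sgen k) = N2 n w - 2"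
proof -
  have "w (-k) < w (-(k+1))" using assms by (metis neg_less_iff_less)
  then show ?thesis using INV_sgen[OF assms(1,2), of w] NEG_sgen[OF assms(1,2), of w] assms(4)
    unfolding N2_def by auto
qed

lemma N2_tgen_desc:
  assumes "1 \<le> n" "\<forall>x. w (-x) = - w x" "w 1 < 0"
  shows "N2 n (w \<circ> tgen) = N2 n w - 2"
proof -
  have "w (-1) = - w 1" using assms by metis
  then show ?thesis using INV_tgen[OF assms(1), of w] NEG_tgen[OF assms(1), of w] assms(3)
    unfolding N2_def by auto
qed

lemma N2_id: "N2 n id = 0"
  unfolding N2_def INV_def NEG_def by (auto intro!: sum.neutral)

lemma N2_nonneg: "0 \<le> N2 n w"
  unfolding N2_def INV_def NEG_def by (intro add_nonneg_nonneg sum_nonneg) auto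

lemma sgen_inv: "1 \<le> k \<Longrightarrow> sgen k (sgen k x) = x" unfolding sgen_def by auto
lemma tgen_inv: "tgen (tgen x) = x" unfolding tgen_def by auto
lemma sgen_odd: "1 \<le> k \<Longrightarrow> sgen k (-x) = - sgen k x" unfolding sgen_def by auto
lemma tgen_odd: "tgen (-x) = - tgen x" unfolding tgen_def by auto

lemma gen_props:
  assumes "1 \<le> n" "g \<in> generators n"
  shows "\<forall>x. g (g x) = x" "\<forall>x. g (-x) = - g x" "\<forall>x. x \<in> Dn n \<longrightarrow> g x \<in> Dn n"
    "\<forall>x. x \<notin> Dn n \<longrightarrow> g x = x"
proof -
  consider (s) k where "g = sgen (int k)" "1 \<le> k" "k < n" | (t) "g = tgen" using assms(2) unfolding generators_def by auto
  then have "(\<forall>x. g (g x) = x) \<and> (\<forall>x. g (-x) = - g x) \<and> (\<forall>x. x \<in> Dn n \<longrightarrow> g x \<in> Dn n) \<and> (\<forall>x. x \<notin> Dn n \<longrightarrow> g x = x)"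
  proof cases
    case s then show ?thesis unfolding Dn_def sgen_def by auto
  next
    case t then show ?thesis using assms(1) unfolding Dn_def tgen_def by auto
  qed
  then show "\<forall>x. g (g x) = x" "\<forall>x. g (-x) = - g x" "\<forall>x. x \<in> Dn n \<longrightarrow> g x \<in> Dn n"
    "\<forall>x. x \<notin> Dn n \<longrightarrow> g x = x" by auto
qed

lemma sp_alt: "signed_perm n w = (bij_betw w (Dn n) (Dn n) \<and> (\<forall>x. w (-x) = - w x) \<and> (\<forall>x. x \<notin> Dn n \<longrightarrow> w x = x))"
  unfolding signed_perm_def Dn_def by simp

lemma sp_gen:
  assumes "1 \<le> n" "signed_perm n w" "g \<in> generators n"
  shows "signed_perm n (w \<circ> g)"
proof -
  note gp = gen_props[OF assms(1,3)]
  have bg: "bij_betw g (Dn n) (Dn n)"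
    by (rule bij_betw_byWitness[where f'=g]) (use gp in auto)
  have bw: "bij_betw w (Dn n) (Dn n)" using assms(2) sp_alt by auto
  have "bij_betw (w \<circ> g) (Dn n) (Dn n)" using bij_betw_trans[OF bg bw] .
  moreover have "\<forall>x. (w \<circ> g) (-x) = - (w \<circ> g) x" using gp(2) assms(2) sp_alt by auto
  moreover have "\<forall>x. x \<notin> Dn n \<longrightarrow> (w \<circ> g) x = x" using gp(4) assms(2) sp_alt by auto
  ultimately show ?thesis using sp_alt by blast
qed

lemma sp_id: "signed_perm n id"
  unfolding sp_alt by auto

lemma sp_desc:
  assumes n: "1 \<le> n" and sp: "signed_perm n w" and nid: "w \<noteq> id"
  shows "(\<exists>k. 1 \<le> k \<and> k < int n \<and> w (k+1) < w k) \<or> w 1 < 0"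
proof (rule ccontr)
  assume "\<not> ?thesis"
  then have A: "\<And>k. 1 \<le> k \<Longrightarrow> k < int n \<Longrightarrow> w k \<le> w (k+1)" and B: "0 \<le> w 1" by auto
  have bw: "bij_betw w (Dn n) (Dn n)" and odd: "\<forall>x. w (-x) = - w x" and out: "\<forall>x. x \<notin> Dn n \<longrightarrow> w x = x"
    using sp sp_alt by auto
  have inD: "w x \<in> Dn n" if "x \<in> Dn n" for x using bw that bij_betwE by blast
  have injw: "inj_on w (Dn n)" using bw bij_betw_imp_inj_on by blast
  have A': "w k < w (k+1)" if "1 \<le> k" "k < int n" for k
  proof -
    have "k \<in> Dn n" "k+1 \<in> Dn n" using that unfolding Dn_def by auto
    then have "w k \<noteq> w (k+1)" using injw inj_onD by fastforce
    then show ?thesis using A[OF that] by simp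
  qed
  have w1: "1 \<le> w 1"
  proof -
    have "1 \<in> Dn n" using n unfolding Dn_def by auto
    then have "w 1 \<in> Dn n" by (rule inD)
    then show ?thesis using B unfolding Dn_def by auto
  qed
  have up: "int j + 1 \<le> w (int j + 1)" if "j < n" for j
    using that
  proof (induction j)
    case 0 then show ?case using w1 by simp
  next
    case (Suc j)
    have "int j + 1 \<le> w (int j + 1)" using Suc by simp
    moreover have "w (int j + 1) < w (int j + 1 + 1)" using A'[of "int j + 1"] Suc.prems by simp
    ultimately show ?case by simp
  qed
  have le_n: "w x \<le> int n" if "x \<in> Dn n" for x using inD[OF that] unfolding Dn_def by auto
  have down: "w (int n - int j) \<le> int n - int j" if "j < n" for j
    using that
  proof (induction j)
    case 0 then show ?case using le_n[of "int n"] n unfolding Dn_def by simp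
  next
    case (Suc j)
    have "w (int n - int j) \<le> int n - int j" using Suc by simp
    moreover have "w (int n - int j - 1) < w (int n - int j - 1 + 1)"
      using A'[of "int n - int j - 1"] Suc.prems by simp
    moreover have "int n - int j - 1 + 1 = int n - int j" by simp
    ultimately have "w (int n - int j - 1) \<le> int n - int j - 1" by simp
    then show ?case by (simp add: algebra_simps)
  qed
  have pos: "w i = i" if "1 \<le> i" "i \<le> int n" for i
  proof -
    have "int (nat (i - 1)) + 1 \<le> w (int (nat (i - 1)) + 1)" using up[of "nat (i-1)"] that by simp
    moreover have "w (int n - int (n - nat i)) \<le> int n - int (n - nat i)" using down[of "n - nat i"] that by simp
    ultimately show ?thesis using that by simp
  qed
  have "w x = x" for x
  proof (cases "x \<in> Dn n")
    case True
    then have "1 \<le> \<bar>x\<bar>" "\<bar>x\<bar> \<le> int n" unfolding Dn_def by auto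
    then consider "1 \<le> x" "x \<le> int n" | "1 \<le> -x" "-x \<le> int n" by (cases "0 \<le> x") auto
    then show ?thesis
    proof cases
      case 1 then show ?thesis using pos by simp
    next
      case 2 then show ?thesis using pos[of "-x"] odd by (metis minus_minus)
    qed
  next
    case False then show ?thesis using out by simp
  qed
  then have "w = id" by auto
  then show False using nid by simp
qed

lemma foldr_comp: "foldr (\<circ>) xs g = foldr (\<circ>) xs id \<circ> g"
  by (induction xs) auto

lemma exists_word:
  assumes n: "1 \<le> n"
  shows "signed_perm n w \<Longrightarrow> \<exists>ws. set ws \<subseteq> generators n \<and> foldr (\<circ>) ws id = w \<and> 2 * int (length ws) = N2 n w"
proof (induction "nat (N2 n w)" arbitrary: w rule: less_induct)
  case less
  show ?case
  proof (cases "w = id")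
    case True then show ?thesis using N2_id by (intro exI[of _ "[]"]) auto
  next
    case False
    have odd: "\<forall>x. w (-x) = - w x" using less.prems sp_alt by auto
    obtain g where g: "g \<in> generators n" "N2 n (w \<circ> g) = N2 n w - 2"
    proof -
      consider (s) k where "1 \<le> k" "k < int n" "w (k+1) < w k" | (t) "w 1 < 0"
        using sp_desc[OF n less.prems False] by blast
      then show ?thesis
      proof cases
        case s
        have "sgen k \<in> generators n" using s unfolding generators_def
          by (auto intro!: exI[of _ "nat k"])
        then show ?thesis using N2_sgen_desc[OF s(1,2) odd s(3)] that by blast
      next
        case t
        have "tgen \<in> generators n" unfolding generators_def by auto
        then show ?thesis using N2_tgen_desc[OF n odd t] that by blast
      qed
    qed
    have sp': "signed_perm n (w \<circ> g)" using sp_gen[OF n less.prems g(1)] .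
    have "nat (N2 n (w \<circ> g)) < nat (N2 n w)" using g(2) N2_nonneg[of n "w \<circ> g"] by simp
    then obtain ws where ws: "set ws \<subseteq> generators n" "foldr (\<circ>) ws id = w \<circ> g" "2 * int (length ws) = N2 n (w \<circ> g)"
      using less.hyps[OF _ sp'] by blast
    have gg: "g \<circ> g = id" using gen_props(1)[OF n g(1)] by auto
    have "foldr (\<circ>) (ws @ [g]) id = w"
      using ws(2) foldr_comp[of ws g] gg by (simp add: comp_assoc)
    then show ?thesis using ws g by (intro exI[of _ "ws @ [g]"]) auto
  qed
qed

lemma word_lower:
  assumes n: "1 \<le> n"
  shows "set ws \<subseteq> generators n \<Longrightarrow> N2 n (foldr (\<circ>) ws id) \<le> 2 * int (length ws)"
proof (induction ws rule: rev_induct)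
  case Nil then show ?case using N2_id[of n] by (simp add: id_def)
next
  case (snoc g ws)
  have e: "foldr (\<circ>) (ws @ [g]) id = foldr (\<circ>) ws id \<circ> g" using foldr_comp[of ws g] by simp
  have le: "N2 n (foldr (\<circ>) ws id \<circ> g) \<le> N2 n (foldr (\<circ>) ws id) + 2"
    using N2_gen_le[OF n] snoc.prems by simp
  have IH: "N2 n (foldr (\<circ>) ws id) \<le> 2 * int (length ws)" by (rule snoc.IH) (use snoc.prems in simp)
  have l: "2 * int (length (ws @ [g])) = 2 * int (length ws) + 2" by simp
  show ?case unfolding e l using le IH by linarith
qed

lemma cox_len:
  assumes n: "1 \<le> n" and sp: "signed_perm n w"
  shows "2 * int (cox_length n w) = N2 n w"
proof -
  obtain ws where ws: "set ws \<subseteq> generators n" "foldr (\<circ>) ws id = w" "2 * int (length ws) = N2 n w"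
    using exists_word[OF n sp] by blast
  let ?P = "\<lambda>m. \<exists>ws. length ws = m \<and> set ws \<subseteq> generators n \<and> foldr (\<circ>) ws id = w"
  have P: "?P (length ws)" using ws by blast
  have le: "cox_length n w \<le> length ws" unfolding cox_length_def by (rule Least_le) (rule P)
  have "?P (cox_length n w)" unfolding cox_length_def by (rule LeastI) (rule P)
  then obtain vs where vs: "length vs = cox_length n w" "set vs \<subseteq> generators n" "foldr (\<circ>) vs id = w" by blast
  have "N2 n w \<le> 2 * int (cox_length n w)" using word_lower[OF n vs(2)] vs by simp
  then show ?thesis using le ws(3) by linarith
qed

lemma asc_s:
  assumes n: "1 \<le> n" and sp: "signed_perm n w" and k: "1 \<le> k" "k < n"
    and L: "cox_length n (w \<circ> sgen (int k)) = cox_length n w + 1"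
  shows "w (int k) < w (int k + 1)"
proof (rule ccontr)
  assume "\<not> ?thesis"
  moreover have "w (int k) \<noteq> w (int k + 1)"
  proof -
    have "int k \<in> Dn n" "int k + 1 \<in> Dn n" using k unfolding Dn_def by auto
    moreover have "inj_on w (Dn n)" using sp sp_alt bij_betw_imp_inj_on by blast
    ultimately show ?thesis using inj_onD by fastforce
  qed
  ultimately have d: "w (int k + 1) < w (int k)" by simp
  have odd: "\<forall>x. w (-x) = - w x" using sp sp_alt by auto
  have g: "sgen (int k) \<in> generators n" using k unfolding generators_def by auto
  have "N2 n (w \<circ> sgen (int k)) = N2 n w - 2" using N2_sgen_desc[of "int k" n w] k odd d by simp
  then show False using cox_len[OF n sp] cox_len[OF n sp_gen[OF n sp g]] L by simp
qed

lemma asc_t: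
  assumes n: "1 \<le> n" and sp: "signed_perm n w"
    and L: "cox_length n (w \<circ> tgen) = cox_length n w + 1"
  shows "0 < w 1"
proof (rule ccontr)
  assume "\<not> ?thesis"
  moreover have "w 1 \<noteq> 0"
  proof -
    have "1 \<in> Dn n" using n unfolding Dn_def by auto
    then have "w 1 \<in> Dn n" using sp sp_alt bij_betwE by blast
    then show ?thesis unfolding Dn_def by auto
  qed
  ultimately have d: "w 1 < 0" by simp
  have odd: "\<forall>x. w (-x) = - w x" using sp sp_alt by auto
  have g: "tgen \<in> generators n" unfolding generators_def by auto
  have "N2 n (w \<circ> tgen) = N2 n w - 2" using N2_tgen_desc[OF n odd d] .
  then show False using cox_len[OF n sp] cox_len[OF n sp_gen[OF n sp g]] L by simp
qed

lemma sum_evec: "(\<Sum>j=1..n. f j * evec i j) = (if 1 \<le> i \<and> i \<le> n then f i else 0)"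
  unfolding evec_def by (simp add: if_distrib sum.delta cong: if_cong)

lemma sum_evec': "(\<Sum>j=1..n. evec i j * f j) = (if 1 \<le> i \<and> i \<le> n then f i else 0)"
  using sum_evec[of f i n] by (simp add: mult.commute)

lemma pairing_A:
  assumes "1 \<le> i" "i < n"
  shows "pairing n \<mu> (\<lambda>k. evec i k - evec (i+1) k) = \<mu> i - \<mu> (i+1)"
proof -
  let ?a = "\<lambda>k. evec i k - evec (i+1) k"
  have sq: "?a j * ?a j = evec i j + evec (i+1) j" for j unfolding evec_def by auto
  have s2: "(\<Sum>j=1..n. ?a j * ?a j) = 2"
    unfolding sq sum.distrib using sum_evec'[of i "\<lambda>_. 1" n] sum_evec'[of "i+1" "\<lambda>_. 1" n] assms by simp
  have cr: "coroot n ?a = ?a" unfolding coroot_def s2 by (rule ext) simp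
  show ?thesis unfolding pairing_def cr right_diff_distrib sum_subtractf sum_evec using assms by simp
qed

lemma pairing_B:
  assumes "1 \<le> n" "s \<noteq> 0"
  shows "pairing n \<mu> (\<lambda>k. s * evec n k) = 2 * \<mu> n / s"
proof -
  have sq: "(s * evec n j) * (s * evec n j) = s * s * evec n j" for j unfolding evec_def by auto
  have s2: "(\<Sum>j=1..n. (s * evec n j) * (s * evec n j)) = s * s"
    unfolding sq using sum_evec'[of n "\<lambda>_. s * s" n] assms
    by (simp add: sum_distrib_left[symmetric] mult.commute)
  have "pairing n \<mu> (\<lambda>k. s * evec n k) = (\<Sum>k=1..n. \<mu> k * (2 * s / (s * s)) * evec n k)"
    unfolding pairing_def coroot_def s2 by (intro sum.cong) (auto simp: field_simps)
  also have "\<dots> = \<mu> n * (2 * s / (s * s))" using sum_evec[of "\<lambda>k. \<mu> k * (2 * s / (s * s))" n n] assms by simp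
  finally show ?thesis using assms by (simp add: field_simps)
qed

lemma posroot_A: "1 \<le> i \<Longrightarrow> i < n \<Longrightarrow> (\<lambda>k. evec i k - evec (i+1) k) \<in> pos_roots T n"
  unfolding pos_roots_def by (intro UnI1) (rule CollectI, intro exI[of _ i] exI[of _ "i+1"], auto)

lemma posroot_B: "1 \<le> n \<Longrightarrow> (\<lambda>k. (if T = TypeB then 1 else 2) * evec n k) \<in> pos_roots T n"
  unfolding pos_roots_def by (intro UnI2) (rule CollectI, intro exI[of _ n], auto)

lemma int_nonpos:
  assumes "integral_weight T n \<mu>" "anti_dominant T n \<mu>" "\<alpha> \<in> pos_roots T n"
  obtains m :: int where "pairing n \<mu> \<alpha> = of_int m" "m \<le> 0"
proof -
  have "pairing n \<mu> \<alpha> \<in> \<int>" using assms(1,3) unfolding integral_weight_def by blast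
  then obtain m where m: "pairing n \<mu> \<alpha> = of_int m" by (auto elim: Ints_cases)
  have "\<not> m > 0" using assms(2,3) m unfolding anti_dominant_def by blast
  then show ?thesis using m that by simp
qed

definition cc :: "nat \<Rightarrow> (nat \<Rightarrow> complex) \<Rightarrow> nat \<Rightarrow> real" where
  "cc n \<mu> k = - Re (\<mu> (n + 1 - k))"

lemma cc_facts_A:
  assumes iw: "integral_weight T n \<mu>" and ad: "anti_dominant T n \<mu>" and k: "1 \<le> k" "k < n"
  shows "cc n \<mu> k \<le> cc n \<mu> (k+1)"
    "cc n \<mu> k = cc n \<mu> (k+1) \<Longrightarrow> pairing n \<mu> (simple_root T n (n - k)) = 0"
proof -
  define i where "i = n - k"
  have i: "1 \<le> i" "i < n" using k unfolding i_def by auto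
  obtain m where m: "pairing n \<mu> (\<lambda>k. evec i k - evec (i+1) k) = of_int m" "m \<le> 0"
    using int_nonpos[OF iw ad posroot_A[OF i]] by blast
  have e: "\<mu> i - \<mu> (i+1) = of_int m" using m pairing_A[OF i] by simp
  have r: "Re (\<mu> i) - Re (\<mu> (i+1)) = of_int m" using arg_cong[OF e, of Re] by simp
  have c1: "cc n \<mu> k = - Re (\<mu> (i+1))" unfolding cc_def i_def using k by (simp add: Suc_diff_le)
  have c2: "cc n \<mu> (k+1) = - Re (\<mu> i)" unfolding cc_def i_def using k by simp
  show "cc n \<mu> k \<le> cc n \<mu> (k+1)" using r m(2) c1 c2 by linarith
  assume "cc n \<mu> k = cc n \<mu> (k+1)"
  then have "m = 0" using r c1 c2 by simp
  moreover have "simple_root T n (n - k) = (\<lambda>k. evec i k - evec (i+1) k)"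
    unfolding simple_root_def i_def using i unfolding i_def by simp
  ultimately show "pairing n \<mu> (simple_root T n (n - k)) = 0" using m by simp
qed

lemma cc_facts_B:
  assumes iw: "integral_weight T n \<mu>" and ad: "anti_dominant T n \<mu>" and n: "1 \<le> n"
  shows "0 \<le> cc n \<mu> 1"
    "cc n \<mu> 1 = 0 \<Longrightarrow> pairing n \<mu> (simple_root T n n) = 0"
proof -
  define s :: complex where "s = (if T = TypeB then 1 else 2)"
  obtain m where m: "pairing n \<mu> (\<lambda>k. s * evec n k) = of_int m" "m \<le> 0"
    using int_nonpos[OF iw ad posroot_B[OF n]] unfolding s_def by blast
  have sn: "s \<noteq> 0" unfolding s_def by simp
  have e: "2 * \<mu> n / s = of_int m" using m pairing_B[OF n sn] by simp
  have rs: "Re s > 0" "Im s = 0" unfolding s_def by auto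
  have e2: "\<mu> n = of_int m * s / 2" using e sn by (simp add: field_simps)
  have r: "Re (\<mu> n) = of_int m * Re s / 2" unfolding e2 using rs by simp
  have c: "cc n \<mu> 1 = - Re (\<mu> n)" unfolding cc_def by simp
  show "0 \<le> cc n \<mu> 1" unfolding c r using m(2) rs by (simp add: mult_nonpos_nonneg divide_nonpos_pos)
  assume "cc n \<mu> 1 = 0"
  then have "m = 0" using c r rs by simp
  moreover have "simple_root T n n = (\<lambda>k. s * evec n k)" unfolding simple_root_def s_def by simp
  ultimately show "pairing n \<mu> (simple_root T n n) = 0" using m by simp
qed

definition dl :: "nat \<Rightarrow> nat \<Rightarrow> int" where
  "dl n i = (if i < n then int i - int n else int i - int n + 1)"

definition Dl :: "nat \<Rightarrow> int list" where
  "Dl n = map (dl n) [0..<2*n]"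

definition idx :: "nat \<Rightarrow> int \<Rightarrow> nat" where
  "idx n x = nat (if x < 0 then x + int n else x + int n - 1)"

lemma Dl_length[simp]: "length (Dl n) = 2 * n" unfolding Dl_def by simp
lemma Dl_nth[simp]: "i < 2 * n \<Longrightarrow> Dl n ! i = dl n i" unfolding Dl_def by simp

lemma dl_mono: "i < j \<Longrightarrow> dl n i < dl n j" unfolding dl_def by auto
lemma dl_in: "i < 2 * n \<Longrightarrow> dl n i \<in> Dn n" unfolding dl_def Dn_def by auto
lemma idx_dl: "i < 2 * n \<Longrightarrow> idx n (dl n i) = i" unfolding dl_def idx_def by auto
lemma idx_lt: "x \<in> Dn n \<Longrightarrow> idx n x < 2 * n" unfolding Dn_def idx_def by auto
lemma dl_idx: "x \<in> Dn n \<Longrightarrow> dl n (idx n x) = x" unfolding Dn_def idx_def dl_def by auto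
lemma idx_mono: "x \<in> Dn n \<Longrightarrow> y \<in> Dn n \<Longrightarrow> x < y \<Longrightarrow> idx n x < idx n y"
  unfolding Dn_def idx_def by auto

lemma Dl_set: "set (Dl n) = Dn n"
proof
  show "set (Dl n) \<subseteq> Dn n" unfolding Dl_def using dl_in by auto
  show "Dn n \<subseteq> set (Dl n)"
  proof
    fix x assume "x \<in> Dn n"
    then have "idx n x < 2 * n" "dl n (idx n x) = x" using idx_lt dl_idx by auto
    then show "x \<in> set (Dl n)" unfolding Dl_def by (metis atLeastLessThan_iff image_eqI set_map set_upt zero_le)
  qed
qed

lemma Dl_distinct: "distinct (Dl n)"
  unfolding Dl_def by (rule distinct_map[THEN iffD2]) (auto intro: inj_onI simp: dl_def split: if_splits)

lemma strict_shape:
  fixes xs :: "'a::linorder list" and f :: "'a \<Rightarrow> 'b::linorder"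
  assumes "distinct xs" "\<forall>a\<in>set xs. \<forall>b\<in>set xs. a < b \<longrightarrow> f a < f b"
  shows "rs_shape (map f xs) = rs_shape xs"
proof (rule std_shape[OF assms(1)])
  show "monoS f (set xs)" unfolding monoS_def using assms(2) by (metis eq_iff le_less)
  fix p q assume pq: "p < q" "q < length xs" "f (xs ! p) = f (xs ! q)"
  have "xs ! p \<noteq> xs ! q" using assms(1) pq by (simp add: nth_eq_iff_index_eq)
  moreover have "xs ! p \<in> set xs" "xs ! q \<in> set xs" using pq by auto
  ultimately show "xs ! p < xs ! q" using assms(2) pq(3) by (metis less_irrefl linorder_neqE)
qed

definition winv :: "nat \<Rightarrow> (int \<Rightarrow> int) \<Rightarrow> int \<Rightarrow> int" where
  "winv n w = the_inv_into (Dn n) w"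

lemma winv_facts:
  assumes "signed_perm n w"
  shows "\<And>x. x \<in> Dn n \<Longrightarrow> winv n w x \<in> Dn n"
    "\<And>x. x \<in> Dn n \<Longrightarrow> w (winv n w x) = x"
    "\<And>a. a \<in> Dn n \<Longrightarrow> winv n w (w a) = a"
    "\<And>a. a \<in> Dn n \<Longrightarrow> w a \<in> Dn n"
    "inj_on w (Dn n)"
proof -
  have b: "bij_betw w (Dn n) (Dn n)" using assms sp_alt by auto
  then have i: "inj_on w (Dn n)" and im: "w ` Dn n = Dn n" by (auto simp: bij_betw_def)
  show "inj_on w (Dn n)" by (rule i)
  fix x assume x: "x \<in> Dn n"
  show "winv n w x \<in> Dn n" unfolding winv_def using the_inv_into_into[OF i, of x] x im by auto
  show "w (winv n w x) = x" unfolding winv_def using f_the_inv_into_f[OF i, of x] x im by auto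
  show "winv n w (w x) = x" unfolding winv_def using the_inv_into_f_f[OF i x] .
  show "w x \<in> Dn n" using x im by auto
qed

lemma Dn_neg: "x \<in> Dn n \<Longrightarrow> -x \<in> Dn n" unfolding Dn_def by auto

lemma winv_odd:
  assumes sp: "signed_perm n w" and x: "x \<in> Dn n"
  shows "winv n w (-x) = - winv n w x"
proof -
  note f = winv_facts[OF sp]
  have odd: "\<forall>x. w (-x) = - w x" using sp sp_alt by auto
  have "w (- winv n w x) = -x" using odd f(2)[OF x] by simp
  then have "winv n w (w (- winv n w x)) = winv n w (-x)" by simp
  then show ?thesis using f(3)[OF Dn_neg[OF f(1)[OF x]]] by simp
qed

definition ct :: "nat \<Rightarrow> (nat \<Rightarrow> complex) \<Rightarrow> int \<Rightarrow> real" where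
  "ct n \<mu> y = (if y > 0 then cc n \<mu> (nat y) else - cc n \<mu> (nat (-y)))"

lemma ct_odd: "y \<noteq> 0 \<Longrightarrow> ct n \<mu> (-y) = - ct n \<mu> y"
  unfolding ct_def by auto

lemma core:
  assumes sp: "signed_perm n w" and m: "1 \<le> m" "m \<le> int n"
  shows "Re (weyl_act n w \<mu> (nat (int n + 1 - m))) = - ct n \<mu> (winv n w m)"
proof -
  note f = winv_facts[OF sp]
  have odd: "\<forall>x. w (-x) = - w x" using sp sp_alt by auto
  have mD: "m \<in> Dn n" using m unfolding Dn_def by auto
  define a where "a = winv n w m"
  have aD: "a \<in> Dn n" and wa: "w a = m" using f(1,2)[OF mD] unfolding a_def by auto
  define k0 where "k0 = nat \<bar>a\<bar>"
  have k0: "1 \<le> k0" "k0 \<le> n" using aD unfolding k0_def Dn_def by auto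
  have wk0: "w (int k0) = sgn a * m"
  proof (cases "a > 0")
    case True then show ?thesis using wa unfolding k0_def by simp
  next
    case False
    then have "a < 0" using aD unfolding Dn_def by auto
    then have "int k0 = -a" unfolding k0_def by simp
    then show ?thesis using odd wa \<open>a < 0\<close> by simp
  qed
  have claim: "(int n + 1 - \<bar>w (int k)\<bar> = int (nat (int n + 1 - m))) = (k = k0)" if k: "k \<in> {1..n}" for k
  proof -
    have kD: "int k \<in> Dn n" "- int k \<in> Dn n" using k unfolding Dn_def by auto
    have "(\<bar>w (int k)\<bar> = m) = (k = k0)"
    proof
      assume h: "\<bar>w (int k)\<bar> = m"
      then consider "w (int k) = m" | "w (- int k) = m" using odd by (cases "w (int k) \<ge> 0") auto
      then show "k = k0"
      proof cases
        case 1
        then have "int k = a" using f(5) kD(1) aD wa inj_onD by metis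
        then show ?thesis unfolding k0_def by simp
      next
        case 2
        then have "- int k = a" using f(5) kD(2) aD wa inj_onD by metis
        then show ?thesis unfolding k0_def by simp
      qed
    next
      assume "k = k0"
      then show "\<bar>w (int k)\<bar> = m" using wk0 m aD unfolding Dn_def by (auto simp: abs_mult sgn_if)
    qed
    moreover have "int (nat (int n + 1 - m)) = int n + 1 - m" using m by simp
    ultimately show ?thesis by auto
  qed
  have "weyl_act n w \<mu> (nat (int n + 1 - m)) =
      (\<Sum>k=1..n. if k = k0 then of_int (sgn (w (int k))) * \<mu> (n + 1 - k) else 0)"
    unfolding weyl_act_def by (rule sum.cong[OF refl]) (simp only: claim)
  also have "\<dots> = of_int (sgn (w (int k0))) * \<mu> (n + 1 - k0)"
    using k0 by (simp add: sum.delta)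
  finally have e: "weyl_act n w \<mu> (nat (int n + 1 - m)) = of_int (sgn (w (int k0))) * \<mu> (n + 1 - k0)" .
  show ?thesis
  proof (cases "a > 0")
    case True
    then have "sgn (w (int k0)) = 1" using wk0 m by (simp add: sgn_mult)
    moreover have "ct n \<mu> (winv n w m) = cc n \<mu> k0" unfolding a_def[symmetric] ct_def k0_def using True by simp
    ultimately show ?thesis unfolding e cc_def by simp
  next
    case False
    then have "a < 0" using aD unfolding Dn_def by auto
    then have "sgn (w (int k0)) = -1" using wk0 m by (simp add: sgn_mult)
    moreover have "ct n \<mu> (winv n w m) = - cc n \<mu> k0" unfolding a_def[symmetric] ct_def k0_def using \<open>a < 0\<close> by simp
    ultimately show ?thesis unfolding e cc_def by simp
  qed
qed

lemma E1:
  assumes sp: "signed_perm n w"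
  shows "map Re (lam_minus n (weyl_act n w \<mu>)) = map (\<lambda>x. ct n \<mu> (winv n w x)) (Dl n)"
proof (rule nth_equalityI)
  show "length (map Re (lam_minus n (weyl_act n w \<mu>))) = length (map (\<lambda>x. ct n \<mu> (winv n w x)) (Dl n))"
    unfolding lam_minus_def by simp
  fix i assume "i < length (map Re (lam_minus n (weyl_act n w \<mu>)))"
  then have i: "i < 2 * n" unfolding lam_minus_def by (simp del: upt_Suc)
  show "map Re (lam_minus n (weyl_act n w \<mu>)) ! i = map (\<lambda>x. ct n \<mu> (winv n w x)) (Dl n) ! i"
  proof (cases "i < n")
    case True
    define m where "m = int n - int i"
    have m: "1 \<le> m" "m \<le> int n" using True unfolding m_def by auto
    have mD: "m \<in> Dn n" using m unfolding Dn_def by auto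
    have l: "map Re (lam_minus n (weyl_act n w \<mu>)) ! i = Re (weyl_act n w \<mu> (i + 1))"
      unfolding lam_minus_def using True by (simp add: nth_append del: upt_Suc)
    have n1: "nat (int n + 1 - m) = i + 1" unfolding m_def using True by simp
    have ne: "winv n w m \<noteq> 0" using winv_facts(1)[OF sp mD] unfolding Dn_def by auto
    have r: "map (\<lambda>x. ct n \<mu> (winv n w x)) (Dl n) ! i = ct n \<mu> (winv n w (- m))"
      using i True unfolding m_def by (simp add: dl_def)
    show ?thesis unfolding l r winv_odd[OF sp mD] ct_odd[OF ne] core[OF sp m, of \<mu>, unfolded n1] ..
  next
    case False
    define m where "m = int i - int n + 1"
    have m: "1 \<le> m" "m \<le> int n" using False i unfolding m_def by auto
    have l: "map Re (lam_minus n (weyl_act n w \<mu>)) ! i = - Re (weyl_act n w \<mu> (2 * n - i))"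
    proof -
      have "Suc (n + n - Suc i) = 2 * n - i" using False i by simp
      then show ?thesis unfolding lam_minus_def using False i by (simp add: nth_append rev_nth del: upt_Suc)
    qed
    have n1: "nat (int n + 1 - m) = 2 * n - i" unfolding m_def using False i by simp
    have r: "map (\<lambda>x. ct n \<mu> (winv n w x)) (Dl n) ! i = ct n \<mu> (winv n w m)"
      using i False unfolding m_def by (simp add: dl_def)
    show ?thesis unfolding l r core[OF sp m, of \<mu>, unfolded n1] by simp
  qed
qed

lemma E2:
  assumes sp: "signed_perm n w"
  shows "minus_vec n w = map w (Dl n)"
proof (rule nth_equalityI)
  show "length (minus_vec n w) = length (map w (Dl n))" unfolding minus_vec_def by simp
  have odd: "\<forall>x. w (-x) = - w x" using sp sp_alt by auto
  fix i assume "i < length (minus_vec n w)"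
  then have i: "i < 2 * n" unfolding minus_vec_def by (simp del: upt_Suc)
  show "minus_vec n w ! i = map w (Dl n) ! i"
  proof (cases "i < n")
    case True
    have "minus_vec n w ! i = - w (int n - int i)"
      unfolding minus_vec_def using True by (simp add: nth_append rev_nth of_nat_diff del: upt_Suc)
    moreover have "map w (Dl n) ! i = w (- (int n - int i))" using i True by (simp add: dl_def)
    ultimately show ?thesis using odd[rule_format, of "int n - int i"] by simp
  next
    case False
    have lt: "Suc 0 + (i - n) < Suc n" using False i by simp
    have "minus_vec n w ! i = w (int i - int n + 1)"
      unfolding minus_vec_def using False i lt by (simp add: nth_append of_nat_diff add.commute del: upt_Suc)
    moreover have "map w (Dl n) ! i = w (int i - int n + 1)" using i False by (simp add: dl_def)
    ultimately show ?thesis by simp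
  qed
qed

lemma chain_mono:
  fixes c :: "nat \<Rightarrow> real"
  assumes cm: "\<And>k. 1 \<le> k \<Longrightarrow> k < n \<Longrightarrow> c k \<le> c (k+1)"
  shows "1 \<le> a \<Longrightarrow> a + d \<le> n \<Longrightarrow> c a \<le> c (a + d)"
proof (induction d)
  case 0 then show ?case by simp
next
  case (Suc d)
  then have "c a \<le> c (a + d)" by simp
  moreover have "c (a + d) \<le> c (a + d + 1)" using cm Suc.prems by simp
  ultimately show ?case by simp
qed

lemma chain_strict:
  fixes c :: "nat \<Rightarrow> real" and w :: "int \<Rightarrow> int"
  assumes cm: "\<And>k. 1 \<le> k \<Longrightarrow> k < n \<Longrightarrow> c k \<le> c (k+1)"
    and ca: "\<And>k. 1 \<le> k \<Longrightarrow> k < n \<Longrightarrow> c k = c (k+1) \<Longrightarrow> w (int k) < w (int k + 1)"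
  shows "1 \<le> a \<Longrightarrow> a + d \<le> n \<Longrightarrow> 0 < d \<Longrightarrow> c a = c (a + d) \<Longrightarrow> w (int a) < w (int (a + d))"
proof (induction d)
  case 0 then show ?case by simp
next
  case (Suc d)
  show ?case
  proof (cases "d = 0")
    case True then show ?thesis using ca[of a] Suc.prems by (simp add: add.commute)
  next
    case False
    have m1: "c a \<le> c (a + d)" using chain_mono[of n c, OF cm, of a d] Suc.prems by simp
    have m2: "c (a + d) \<le> c (a + d + 1)" using cm Suc.prems by simp
    have e1: "c a = c (a + d)" and e2: "c (a + d) = c (a + d + 1)" using m1 m2 Suc.prems by auto
    have "w (int a) < w (int (a + d))" using Suc.IH Suc.prems False e1 by simp
    moreover have "w (int (a + d)) < w (int (a + d) + 1)" using ca[of "a + d"] Suc.prems e2 by simp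
    ultimately show ?thesis by (simp add: add.commute add.left_commute)
  qed
qed

lemma chain_le:
  fixes c :: "nat \<Rightarrow> real" and w :: "int \<Rightarrow> int"
  assumes cm: "\<And>k. 1 \<le> k \<Longrightarrow> k < n \<Longrightarrow> c k \<le> c (k+1)"
    and ca: "\<And>k. 1 \<le> k \<Longrightarrow> k < n \<Longrightarrow> c k = c (k+1) \<Longrightarrow> w (int k) < w (int k + 1)"
    and ab: "1 \<le> a" "a < b" "b \<le> n" "c a = c b"
  shows "w (int a) < w (int b)"
  using chain_strict[of n c w, OF cm ca, of a "b - a"] ab by simp

lemma G3:
  fixes w :: "int \<Rightarrow> int"
  assumes sp: "signed_perm n w"
    and cm: "\<And>k. 1 \<le> k \<Longrightarrow> k < n \<Longrightarrow> cc n \<mu> k \<le> cc n \<mu> (k+1)"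
    and ca: "\<And>k. 1 \<le> k \<Longrightarrow> k < n \<Longrightarrow> cc n \<mu> k = cc n \<mu> (k+1) \<Longrightarrow> w (int k) < w (int k + 1)"
    and c0: "0 \<le> cc n \<mu> 1" and c1: "cc n \<mu> 1 = 0 \<Longrightarrow> 0 < w 1"
    and xy: "x \<in> Dn n" "y \<in> Dn n" "x < y" "ct n \<mu> x = ct n \<mu> y"
  shows "w x < w y"
proof -
  have odd: "\<forall>x. w (-x) = - w x" using sp sp_alt by auto
  let ?c = "cc n \<mu>"
  have cpos: "0 \<le> ?c k" if "1 \<le> k" "k \<le> n" for k
    using chain_mono[of n ?c, OF cm, of 1 "k - 1"] that c0 by simp
  consider "0 < x" | "y < 0" | "x < 0" "0 < y" using xy unfolding Dn_def by fastforce
  then show ?thesis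
  proof cases
    case 1
    then have "0 < y" using xy by simp
    then have "w (int (nat x)) < w (int (nat y))"
      using chain_le[of n ?c w, OF cm ca, of "nat x" "nat y"] xy 1 unfolding ct_def Dn_def by auto
    then show ?thesis using 1 \<open>0 < y\<close> by simp
  next
    case 2
    then have "x < 0" using xy by simp
    have "w (int (nat (-y))) < w (int (nat (-x)))"
      using chain_le[of n ?c w, OF cm ca, of "nat (-y)" "nat (-x)"] xy 2 \<open>x < 0\<close> unfolding ct_def Dn_def by auto
    then have "w (-y) < w (-x)" using 2 \<open>x < 0\<close> by simp
    then show ?thesis using odd by (metis neg_less_iff_less)
  next
    case 3
    have kx: "1 \<le> nat (-x)" "nat (-x) \<le> n" and ky: "1 \<le> nat y" "nat y \<le> n" using xy 3 unfolding Dn_def by auto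
    have "- ?c (nat (-x)) = ?c (nat y)" using xy(4) 3 unfolding ct_def by simp
    then have z: "?c (nat (-x)) = 0" "?c (nat y) = 0" using cpos[OF kx] cpos[OF ky] by auto
    have z1: "?c 1 = 0" using chain_mono[of n ?c, OF cm, of 1 "nat (-x) - 1"] kx z c0 by simp
    have w1: "0 < w 1" using c1[OF z1] .
    have pos: "0 < w (int k)" if "1 \<le> k" "k \<le> n" "?c k = 0" for k
    proof (cases "k = 1")
      case True then show ?thesis using w1 by simp
    next
      case False
      then have "w (int 1) < w (int k)" using chain_le[of n ?c w, OF cm ca, of 1 k] that z1 by simp
      then show ?thesis using w1 by simp
    qed
    have "0 < w (int (nat (-x)))" using pos[OF kx z(1)] .
    then have "w x < 0" using odd 3 by (metis add.inverse_inverse neg_less_0_iff_less nat_0_le order_less_imp_le)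
    moreover have "0 < w (int (nat y))" using pos[OF ky z(2)] .
    ultimately show ?thesis using 3 by simp
  qed
qed

lemma ct_mono:
  assumes cm: "\<And>k. 1 \<le> k \<Longrightarrow> k < n \<Longrightarrow> cc n \<mu> k \<le> cc n \<mu> (k+1)"
    and c0: "0 \<le> cc n \<mu> 1"
    and xy: "x \<in> Dn n" "y \<in> Dn n" "x \<le> y"
  shows "ct n \<mu> x \<le> ct n \<mu> y"
proof -
  let ?c = "cc n \<mu>"
  have cpos: "0 \<le> ?c k" if "1 \<le> k" "k \<le> n" for k
    using chain_mono[of n ?c, OF cm, of 1 "k - 1"] that c0 by simp
  have cle: "?c a \<le> ?c b" if "1 \<le> a" "a \<le> b" "b \<le> n" for a b
    using chain_mono[of n ?c, OF cm, of a "b - a"] that by simp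
  consider "0 < x" | "y < 0" | "x < 0" "0 < y" using xy unfolding Dn_def by fastforce
  then show ?thesis
  proof cases
    case 1 then show ?thesis using cle[of "nat x" "nat y"] xy unfolding ct_def Dn_def by auto
  next
    case 2 then show ?thesis using cle[of "nat (-y)" "nat (-x)"] xy unfolding ct_def Dn_def by auto
  next
    case 3
    have a: "0 \<le> ?c (nat (-x))" using cpos[of "nat (-x)"] 3 xy unfolding Dn_def by auto
    have b: "0 \<le> ?c (nat y)" using cpos[of "nat y"] 3 xy unfolding Dn_def by auto
    show ?thesis using a b 3 unfolding ct_def by auto
  qed
qed

lemma idx_inj: "inj_on (idx n) (Dn n)"
proof (rule inj_onI)
  fix x y assume "x \<in> Dn n" "y \<in> Dn n" "idx n x = idx n y"
  then show "x = y" using idx_mono[of x n y] idx_mono[of y n x] by (cases x y rule: linorder_cases) auto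
qed

theorem mainTheorem8:
  fixes T :: rtype and n :: nat and \<mu> :: "nat \<Rightarrow> complex" and w :: "int \<Rightarrow> int"
  assumes "1 \<le> n"
    and "integral_weight T n \<mu>"
    and "anti_dominant T n \<mu>"
    and "w \<in> WJ T n \<mu>"
  shows "rs_shape (map Re (lam_minus n (weyl_act n w \<mu>))) = rs_shape (minus_vec n w)"
proof -
  note n = assms(1) and iw = assms(2) and ad = assms(3)
  have sp: "signed_perm n w" using assms(4) unfolding WJ_def by simp
  have WJc: "\<And>i. i \<in> {1..n} \<Longrightarrow> pairing n \<mu> (simple_root T n i) = 0 \<Longrightarrow>
      cox_length n (w \<circ> simple_refl n i) = cox_length n w + 1"
    using assms(4) unfolding WJ_def by simp
  note f = winv_facts[OF sp]
  have cm: "\<And>k. 1 \<le> k \<Longrightarrow> k < n \<Longrightarrow> cc n \<mu> k \<le> cc n \<mu> (k+1)"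
    using cc_facts_A(1)[OF iw ad] by blast
  have ca: "w (int k) < w (int k + 1)" if k: "1 \<le> k" "k < n" "cc n \<mu> k = cc n \<mu> (k+1)" for k
  proof -
    have p: "pairing n \<mu> (simple_root T n (n - k)) = 0" using cc_facts_A(2)[OF iw ad k(1,2) k(3)] .
    have "n - k \<in> {1..n}" using k by auto
    then have L: "cox_length n (w \<circ> simple_refl n (n - k)) = cox_length n w + 1" using WJc p by blast
    have "simple_refl n (n - k) = sgen (int k)" unfolding simple_refl_def using k by simp
    then show ?thesis using asc_s[OF n sp k(1,2)] L by simp
  qed
  have c0: "0 \<le> cc n \<mu> 1" using cc_facts_B(1)[OF iw ad n] .
  have c1: "0 < w 1" if z: "cc n \<mu> 1 = 0"
  proof -
    have p: "pairing n \<mu> (simple_root T n n) = 0" using cc_facts_B(2)[OF iw ad n z] .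
    have "n \<in> {1..n}" using n by auto
    then have L: "cox_length n (w \<circ> simple_refl n n) = cox_length n w + 1" using WJc p by blast
    have "simple_refl n n = tgen" unfolding simple_refl_def by simp
    then show ?thesis using asc_t[OF n sp] L by simp
  qed
  define xs where "xs = map (winv n w) (Dl n)"
  have xsD: "set xs \<subseteq> Dn n" unfolding xs_def Dl_set[symmetric] using f(1) Dl_set by auto
  have inj_wi: "inj_on (winv n w) (Dn n)"
  proof (rule inj_onI)
    fix x y assume xy: "x \<in> Dn n" "y \<in> Dn n" "winv n w x = winv n w y"
    then have "w (winv n w x) = w (winv n w y)" by simp
    then show "x = y" using f(2)[OF xy(1)] f(2)[OF xy(2)] by simp
  qed
  have dxs: "distinct xs" unfolding xs_def using Dl_distinct inj_wi Dl_set by (simp add: distinct_map)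
  have S1: "map Re (lam_minus n (weyl_act n w \<mu>)) = map (ct n \<mu>) xs"
    unfolding E1[OF sp] xs_def by simp
  have S2: "rs_shape (map (ct n \<mu>) xs) = rs_shape xs"
  proof (rule std_shape[OF dxs])
    show "monoS (ct n \<mu>) (set xs)" unfolding monoS_def using ct_mono[OF cm c0] xsD by blast
    fix p q assume pq: "p < q" "q < length xs" "ct n \<mu> (xs ! p) = ct n \<mu> (xs ! q)"
    have l: "length xs = 2 * n" unfolding xs_def by simp
    have xp: "xs ! p = winv n w (dl n p)" "xs ! q = winv n w (dl n q)" using pq l unfolding xs_def by auto
    have dD: "dl n p \<in> Dn n" "dl n q \<in> Dn n" using pq l dl_in by auto
    have inD: "xs ! p \<in> Dn n" "xs ! q \<in> Dn n" using xp f(1) dD by auto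
    have ne: "xs ! p \<noteq> xs ! q" using dxs pq by (simp add: nth_eq_iff_index_eq)
    show "xs ! p < xs ! q"
    proof (rule ccontr)
      assume "\<not> xs ! p < xs ! q"
      then have "xs ! q < xs ! p" using ne by simp
      then have "w (xs ! q) < w (xs ! p)" using G3[OF sp cm ca c0 c1 inD(2) inD(1)] pq(3) by simp
      then have "dl n q < dl n p" using xp f(2) dD by simp
      then show False using dl_mono[OF pq(1), of n] by simp
    qed
  qed
  have S3: "rs_shape (map (idx n) xs) = rs_shape xs"
    using strict_shape[OF dxs] idx_mono xsD by blast
  have dw: "distinct (map w (Dl n))"
    using Dl_distinct f(5) Dl_set by (simp add: distinct_map)
  have wD: "set (map w (Dl n)) \<subseteq> Dn n" using f(4) Dl_set by auto
  have S4: "rs_shape (map (idx n) (map w (Dl n))) = rs_shape (map w (Dl n))"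
    using strict_shape[OF dw] idx_mono wD by blast
  have S5: "rs_shape (map (idx n) (map w (Dl n))) = rs_shape (map (idx n) xs)"
  proof (rule rs_symmetry[where N = "2 * n"])
    show "length (map (idx n) (map w (Dl n))) = 2 * n" by simp
    show "length (map (idx n) xs) = 2 * n" unfolding xs_def by simp
    show "distinct (map (idx n) (map w (Dl n)))"
      using dw inj_on_subset[OF idx_inj wD] distinct_map by blast
    show "distinct (map (idx n) xs)"
      using dxs xsD inj_on_subset[OF idx_inj] by (simp add: distinct_map)
    show "set (map (idx n) (map w (Dl n))) \<subseteq> {..<2 * n}" using wD idx_lt by auto
    show "set (map (idx n) xs) \<subseteq> {..<2 * n}" using xsD idx_lt by auto
    fix i j assume ij: "i < 2 * n" "j < 2 * n"
    have di: "dl n i \<in> Dn n" "dl n j \<in> Dn n" using ij dl_in by auto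
    have u: "map (idx n) (map w (Dl n)) ! i = idx n (w (dl n i))" using ij by simp
    have v: "map (idx n) xs ! j = idx n (winv n w (dl n j))" using ij unfolding xs_def by simp
    have "(idx n (w (dl n i)) = j) = (w (dl n i) = dl n j)"
    proof
      assume "idx n (w (dl n i)) = j"
      then show "w (dl n i) = dl n j" using dl_idx[OF f(4)[OF di(1)]] by simp
    next
      assume "w (dl n i) = dl n j"
      then show "idx n (w (dl n i)) = j" using idx_dl[OF ij(2)] by simp
    qed
    also have "\<dots> = (winv n w (dl n j) = dl n i)"
    proof
      assume "w (dl n i) = dl n j"
      then show "winv n w (dl n j) = dl n i" using f(3)[OF di(1)] by simp
    next
      assume "winv n w (dl n j) = dl n i"
      then show "w (dl n i) = dl n j" using f(2)[OF di(2)] by simp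
    qed
    also have "\<dots> = (idx n (winv n w (dl n j)) = i)"
    proof
      assume "winv n w (dl n j) = dl n i"
      then show "idx n (winv n w (dl n j)) = i" using idx_dl[OF ij(1)] by simp
    next
      assume "idx n (winv n w (dl n j)) = i"
      then show "winv n w (dl n j) = dl n i" using dl_idx[OF f(1)[OF di(2)]] by simp
    qed
    finally show "(map (idx n) (map w (Dl n)) ! i = j) = (map (idx n) xs ! j = i)" unfolding u v .
  qed
  show ?thesis unfolding S1 S2 E2[OF sp] using S3 S4 S5 by simp
qed

end
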